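(* Let $X$ be a complete doubling metric space, let $\{E_{\mathtt{i}}\}_{\mathtt{i}\in\Sigma}$ be a Moran construction in $X$ with limit set $E$, and let $\mu$ be a measure supported on $E$. Then for $\mu$-almost all $x_{\mathtt{i}}\in E$ (where $\mathtt{i}\in\Sigma_\infty$), \[ \overline{\dim}_{\mathrm{loc}}(\mu,x_{\mathtt{i}})=\limsup_{n\to\infty}\frac{\log\mu(E_{\mathtt{i}|_n})}{\log\operatorname{diam}(E_{\mathtt{i}|_n})},\qquad \underline{\dim}_{\mathrm{loc}}(\mu,x_{\mathtt{i}})=\liminf_{n\to\infty}\frac{\log\mu(E_{\mathtt{i}|_n})}{\log\operatorname{diam}(E_{\mathtt{i}|_n})}. \]
   Context: A metric space is doubling if there is $N$ such that every closed ball $B(x,r)$ is covered by $N$ closed balls of radius $r/2$. A "measure" is a nontrivial Borel regular outer measure, finite on bounded sets. Local dimensions: $\overline{\dim}_{\mathrm{loc}}(\mu,x)=\limsup_{r\downarrow0}\log\mu(B(x,r))/\log r$, $\underline{\dim}_{\mathrm{loc}}(\mu,x)=\liminf_{r\downarrow0}\log\mu(B(x,r))/\log r$. Words: $I$ is a countable set, $I^0=\{\varnothing\}$, $I^\infty=I^{\mathbb{N}}$; for a word $\mathtt{i}=i_1i_2\cdots$, $\mathtt{i}|_n=i_1\cdots i_n$, $\mathtt{i}|_0=\varnothing$, and for $\mathtt{i}\in I^n$, $\mathtt{i}^-=\mathtt{i}|_{n-1}$. For $\Sigma\subset\bigcup_{n\ge0}I^n$, $\Sigma_n=\Sigma\cap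 I^n$ and $\Sigma_\infty=\{\mathtt{i}\in I^\infty:\mathtt{i}|_n\in\Sigma_n\ \forall n\}$. If $\mathtt{i}\in\Sigma$ and $\mathtt{j}=\mathtt{i}i\in\Sigma$ for some $i\in I$, write $\mathtt{j}\prec\mathtt{i}$ (offspring). $\Sigma$ is a codetree if $\varnothing\in\Sigma$, $\mathtt{i}^-\in\Sigma$ whenever $\varnothing\ne\mathtt{i}\in\Sigma$, and each $\mathtt{i}\in\Sigma$ has a positive finite number of offspring. A Moran construction is a collection $\{E_{\mathtt{i}}\subset X:\mathtt{i}\in\Sigma\}$ of compact sets of positive diameter, $\Sigma$ a codetree, such that: (M1) $E_{\mathtt{i}}\subset E_{\mathtt{i}^-}$ for $\mathtt{i}\ne\varnothing$; (M2) $\operatorname{diam}(E_{\mathtt{i}|_n})\to0$ for each $\mathtt{i}\in\Sigma_\infty$; (M3) $E_{\mathtt{i}i}\cap E_{\mathtt{i}j}=\emptyset$ if $\mathtt{i}i,\mathtt{i}j\in\Sigma$, $i\ne j$; (M4) there is a uniform constant $C_0>0$ such that each $E_{\mathtt{i}}$ contains a ball $B(x,C_0\operatorname{diam}(E_{\mathtt{i}}))$ for some $x\in E_{\mathtt{i}}$; (M5) $\log\operatorname{diam}(E_{\mathtt{i}|_n})/\log\min\{\operatorname{diam}(E_{\mathtt{j}}):\mathtt{j}\prec\mathtt{i}|_n\}\to1$ as $n\to\infty$, uniformly in $\mathtt{i}\in\Sigma_\infty$. The limit set is $E=\bigcap_{n}\bigcup_{\mathtt{i}\in\Sigma_n}E_{\mathtt{i}}$,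 and for $\mathtt{i}\in\Sigma_\infty$, $x_{\mathtt{i}}$ is the unique point of $\bigcap_n E_{\mathtt{i}|_n}$. *)

theory Defs
  imports "HOL-Analysis.Analysis"
begin

definition doubling_space :: "'a::metric_space itself \<Rightarrow> bool" where
  "doubling_space _ \<longleftrightarrow>
     (\<exists>N::nat. \<forall>(x::'a) (r::real). r > 0 \<longrightarrow>
        (\<exists>F. finite F \<and> card F \<le> N \<and> cball x r \<subseteq> (\<Union>y\<in>F. cball y (r/2))))"

definition outer_measure :: "('a set \<Rightarrow> ennreal) \<Rightarrow> bool" where
  "outer_measure \<mu> \<longleftrightarrow>
     \<mu> {} = 0 \<and>
     (\<forall>A B. A \<subseteq> B \<longrightarrow> \<mu> A \<le> \<mu> B) \<and>
     (\<forall>A::nat \<Rightarrow> 'a set. \<mu> (\<Union>n. A n) \<le> (\<Sum>n. \<mu> (A n)))"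

definition om_measurable :: "('a set \<Rightarrow> ennreal) \<Rightarrow> 'a set \<Rightarrow> bool" where
  "om_measurable \<mu> B \<longleftrightarrow> (\<forall>A. \<mu> A = \<mu> (A \<inter> B) + \<mu> (A - B))"

definition borel_regular_outer_measure :: "('a::topological_space set \<Rightarrow> ennreal) \<Rightarrow> bool" where
  "borel_regular_outer_measure \<mu> \<longleftrightarrow>
     outer_measure \<mu> \<and>
     (\<forall>B \<in> sets borel. om_measurable \<mu> B) \<and>
     (\<forall>A. \<exists>B \<in> sets borel. A \<subseteq> B \<and> \<mu> B = \<mu> A)"

definition is_measure :: "('a::metric_space set \<Rightarrow> ennreal) \<Rightarrow> bool" where
  "is_measure \<mu> \<longleftrightarrow>
     borel_regular_outer_measure \<mu> \<and>
     (\<exists>A. \<mu> A \<noteq> 0) \<and>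
     (\<forall>A. bounded A \<longrightarrow> \<mu> A < \<infinity>)"

definition support :: "('a::metric_space set \<Rightarrow> ennreal) \<Rightarrow> 'a set" where
  "support \<mu> = {x. \<forall>r>0. \<mu> (ball x r) > 0}"

definition upper_local_dim :: "('a::metric_space set \<Rightarrow> ennreal) \<Rightarrow> 'a \<Rightarrow> ereal" where
  "upper_local_dim \<mu> x =
     Limsup (at_right (0::real)) (\<lambda>r. ereal (ln (enn2real (\<mu> (cball x r))) / ln r))"

definition lower_local_dim :: "('a::metric_space set \<Rightarrow> ennreal) \<Rightarrow> 'a \<Rightarrow> ereal" where
  "lower_local_dim \<mu> x =
     Liminf (at_right (0::real)) (\<lambda>r. ereal (ln (enn2real (\<mu> (cball x r))) / ln r))"

text \<open>Finite words are lists (the word i_1...i_n is the list [i_1,...,i_n]),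
  infinite words are functions nat \<Rightarrow> 'i (i_{k+1} is s k).  The alphabet I is the
  countable type 'i.\<close>

definition prefix_of :: "(nat \<Rightarrow> 'i) \<Rightarrow> nat \<Rightarrow> 'i list" where
  "prefix_of s n = map s [0..<n]"

definition offspring :: "'i list set \<Rightarrow> 'i list \<Rightarrow> 'i list set" where
  "offspring \<Sigma> w = {v. \<exists>a. v = w @ [a] \<and> v \<in> \<Sigma>}"

definition level :: "'i list set \<Rightarrow> nat \<Rightarrow> 'i list set" where
  "level \<Sigma> n = {w \<in> \<Sigma>. length w = n}"

definition infinite_words :: "'i list set \<Rightarrow> (nat \<Rightarrow> 'i) set" where
  "infinite_words \<Sigma> = {s. \<forall>n. prefix_of s n \<in> \<Sigma>}"

definition codetree :: "'i list set \<Rightarrow> bool" where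
  "codetree \<Sigma> \<longleftrightarrow>
     [] \<in> \<Sigma> \<and>
     (\<forall>w \<in> \<Sigma>. w \<noteq> [] \<longrightarrow> butlast w \<in> \<Sigma>) \<and>
     (\<forall>w \<in> \<Sigma>. finite (offspring \<Sigma> w) \<and> offspring \<Sigma> w \<noteq> {})"

definition moran_construction ::
  "'i list set \<Rightarrow> ('i list \<Rightarrow> 'a::metric_space set) \<Rightarrow> bool" where
  "moran_construction \<Sigma> E \<longleftrightarrow>
     codetree \<Sigma> \<and>
     (\<forall>w \<in> \<Sigma>. compact (E w) \<and> diameter (E w) > 0) \<and>
     \<comment> \<open>(M1)\<close>
     (\<forall>w \<in> \<Sigma>. w \<noteq> [] \<longrightarrow> E w \<subseteq> E (butlast w)) \<and>
     \<comment> \<open>(M2)\<close>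
     (\<forall>s \<in> infinite_words \<Sigma>. (\<lambda>n. diameter (E (prefix_of s n))) \<longlonglongrightarrow> 0) \<and>
     \<comment> \<open>(M3)\<close>
     (\<forall>w a b. w @ [a] \<in> \<Sigma> \<longrightarrow> w @ [b] \<in> \<Sigma> \<longrightarrow> a \<noteq> b \<longrightarrow> E (w @ [a]) \<inter> E (w @ [b]) = {}) \<and>
     \<comment> \<open>(M4)\<close>
     (\<exists>C0>0. \<forall>w \<in> \<Sigma>. \<exists>x \<in> E w. cball x (C0 * diameter (E w)) \<subseteq> E w) \<and>
     \<comment> \<open>(M5), uniformly in s\<close>
     (\<forall>\<epsilon>>0. \<exists>N. \<forall>s \<in> infinite_words \<Sigma>. \<forall>n \<ge> N.
        \<bar>ln (diameter (E (prefix_of s n))) /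
           ln (Min (diameter ` E ` offspring \<Sigma> (prefix_of s n))) - 1\<bar> < \<epsilon>)"

definition limit_set :: "'i list set \<Rightarrow> ('i list \<Rightarrow> 'a set) \<Rightarrow> 'a set" where
  "limit_set \<Sigma> E = (\<Inter>n. \<Union>w \<in> level \<Sigma> n. E w)"

text \<open>The point x_i: the unique point of the intersection of the E_{i|n}.\<close>
definition moran_point :: "('i list \<Rightarrow> 'a set) \<Rightarrow> (nat \<Rightarrow> 'i) \<Rightarrow> 'a" where
  "moran_point E s = (THE x. x \<in> (\<Inter>n. E (prefix_of s n)))"

end

theory Submission
  imports Defs
begin


lemma dyad:
  fixes d :: real assumes "0 < d" "d < 1"
  shows "\<exists>k\<ge>1. (1/2)^k < d \<and> d \<le> (1/2)^(k-1)"
proof -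
  obtain k0 where k0: "(1/2::real)^k0 < d" using real_arch_pow_inv[of d "1/2"] assms by auto
  define k where "k = (LEAST k. (1/2::real)^k < d)"
  have k: "(1/2::real)^k < d" unfolding k_def by (rule LeastI[of _ k0]) (rule k0)
  have k1: "k \<ge> 1" using k assms by (cases k) auto
  have "\<not> (1/2::real)^(k-1) < d" unfolding k_def
    by (rule not_less_Least) (use k1 k_def in auto)
  then show ?thesis using k k1 by (auto simp: not_less)
qed

lemma ln_half_pow: "ln ((1/2::real)^k) = - (real k * ln 2)"
  by (simp add: ln_realpow ln_div)

lemma ln_pow_powr: "ln (((2::real) powr \<eta>)^k) = real k * (\<eta> * ln 2)"
  by (simp add: ln_realpow ln_powr)

lemma ln_div_neg_tend: "((\<lambda>r. C / ln r) \<longlongrightarrow> (0::real)) (at_right 0)"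
  by (rule tendsto_divide_0[OF tendsto_const]) (rule filterlim_mono[OF ln_at_0 at_bot_le_at_infinity order_refl])

locale transfer_ctx =
  fixes d a :: "nat \<Rightarrow> real" and b :: "real \<Rightarrow> real" and B :: real
  assumes dpos: "\<And>n. d n > 0" and dmono: "\<And>m n. m \<le> n \<Longrightarrow> d n \<le> d m" and dlim: "d \<longlonglongrightarrow> 0"
    and apos: "\<And>n. a n > 0" and amono: "\<And>m n. m \<le> n \<Longrightarrow> a n \<le> a m"
    and bpos: "\<And>r. r > 0 \<Longrightarrow> b r > 0" and bmono: "\<And>r r'. 0 < r \<Longrightarrow> r \<le> r' \<Longrightarrow> b r \<le> b r'"
    and ab: "\<And>n r. d n \<le> r \<Longrightarrow> a n \<le> b r"
    and Bpos: "B > 0" and bB: "\<And>r. 0 < r \<Longrightarrow> r \<le> 1 \<Longrightarrow> b r \<le> B" and aB: "\<And>n. a n \<le> B"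
    and ratio: "\<And>\<epsilon>. \<epsilon> > 0 \<Longrightarrow> eventually (\<lambda>n. ln (d (Suc n)) \<ge> (1+\<epsilon>) * ln (d n)) sequentially"
    and good: "\<And>\<eta>. \<eta> > 0 \<Longrightarrow> \<exists>K. \<forall>k\<ge>K. \<exists>m. d m \<le> (1/2)^k \<and> b ((1/2)^k) \<le> (2 powr \<eta>)^k * a m"
begin

definition f :: "real \<Rightarrow> real" where "f r = ln (b r) / ln r"
definition R :: "nat \<Rightarrow> real" where "R n = ln (a n) / ln (d n)"

lemma ev_d: "c > 0 \<Longrightarrow> eventually (\<lambda>n. d n < c) sequentially"
  using order_tendstoD(2)[OF dlim] by auto

lemma d_at_right: "filterlim d (at_right 0) sequentially"
  by (rule tendsto_imp_filterlim_at_right[OF dlim]) (simp add: dpos)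

lemma f_lower: assumes "c < 0" shows "eventually (\<lambda>r. c < f r) (at_right 0)"
proof -
  have "eventually (\<lambda>r. c < ln B / ln r) (at_right 0)"
    using order_tendstoD(1)[OF ln_div_neg_tend[of "ln B"]] assms by auto
  moreover have "eventually (\<lambda>r. r \<in> {0<..<1}) (at_right (0::real))"
    by (rule eventually_at_right_real) simp
  ultimately show ?thesis
  proof eventually_elim
    case (elim r)
    then have r: "0 < r" "r < 1" by auto
    have "ln (b r) \<le> ln B" using bB[of r] bpos[of r] r by simp
    moreover have "ln r < 0" using r by simp
    ultimately have "ln B / ln r \<le> ln (b r) / ln r" by (simp add: divide_right_mono_neg)
    then show ?case using elim unfolding f_def by simp
  qed
qed

lemma partA:
  assumes ev: "eventually (\<lambda>n. R n < y') sequentially" and yy: "y' < y"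
  shows "eventually (\<lambda>r. f r < y) (at_right 0)"
proof -
  define \<epsilon> where "\<epsilon> = (y - y') / (2 * (\<bar>y'\<bar> + 1))"
  have \<epsilon>: "\<epsilon> > 0" using yy unfolding \<epsilon>_def by (simp add: field_simps)
  have \<epsilon>2: "\<bar>y'\<bar> * \<epsilon> < y - y'"
  proof -
    have "\<bar>y'\<bar> * \<epsilon> = (y - y') * (\<bar>y'\<bar> / (2 * (\<bar>y'\<bar> + 1)))" unfolding \<epsilon>_def by simp
    also have "\<dots> < (y - y') * 1"
      by (rule mult_strict_left_mono) (use yy in \<open>auto simp: field_simps\<close>)
    finally show ?thesis by simp
  qed
  obtain N1 where N1: "\<And>n. n \<ge> N1 \<Longrightarrow> R n < y'" using ev by (auto simp: eventually_sequentially)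
  obtain N2 where N2: "\<And>n. n \<ge> N2 \<Longrightarrow> ln (d (Suc n)) \<ge> (1+\<epsilon>) * ln (d n)"
    using ratio[OF \<epsilon>] by (auto simp: eventually_sequentially)
  obtain N3 where N3: "\<And>n. n \<ge> N3 \<Longrightarrow> d n < 1" using ev_d[of 1] by (auto simp: eventually_sequentially)
  define N where "N = max N1 (max N2 N3)"
  have "\<forall>r>0. r < d N \<longrightarrow> f r < y"
  proof (intro allI impI)
    fix r :: real assume r: "r > 0" "r < d N"
    have "N3 \<le> N" unfolding N_def by simp
    then have rl: "r < 1" using r N3[of N] by linarith
    obtain n0 where "d n0 < r" using ev_d[OF r(1)] by (auto simp: eventually_sequentially)
    then have ex: "d n0 \<le> r" by simp
    define n where "n = (LEAST n. d n \<le> r)"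
    have dn: "d n \<le> r" unfolding n_def by (rule LeastI[of _ n0]) (rule ex)
    have nN: "n > N"
    proof (rule ccontr)
      assume "\<not> n > N" then have "d N \<le> d n" using dmono by simp
      then show False using dn r by simp
    qed
    then obtain p where p: "n = Suc p" "p \<ge> N" by (cases n) auto
    have dp: "\<not> d p \<le> r" unfolding n_def by (rule not_less_Least) (use p n_def in auto)
    have lr: "ln r < 0" using r rl by simp
    have l1: "ln (d n) \<le> ln r" using dn dpos[of n] r by simp
    have l2: "ln r < ln (d p)" using dp dpos[of p] r by simp
    have l3: "ln (d n) \<ge> (1+\<epsilon>) * ln (d p)" using N2[of p] p unfolding N_def by simp
    have Rn: "R n < y'" using N1[of n] nN unfolding N_def by simp
    have abn: "ln (a n) \<le> ln (b r)" using ab[OF dn] apos[of n] by simp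
    have fr: "f r \<le> ln (a n) / ln r" unfolding f_def using abn lr by (simp add: divide_right_mono_neg)
    define t where "t = ln (d n) / ln r"
    have t1: "t \<ge> 1" unfolding t_def using l1 lr by (simp add: le_divide_eq)
    have "(1+\<epsilon>) * ln r \<le> (1+\<epsilon>) * ln (d p)" using l2 \<epsilon> by simp
    then have "ln (d n) \<ge> (1+\<epsilon>) * ln r" using l3 by linarith
    then have t2: "t \<le> 1 + \<epsilon>" unfolding t_def using lr by (simp add: divide_le_eq)
    have ldn: "ln (d n) \<noteq> 0" using l1 lr by simp
    have eq: "ln (a n) / ln r = R n * t" unfolding R_def t_def using ldn by simp
    have "R n * t < y"
    proof (cases "R n \<ge> 0")
      case True
      have "R n * t \<le> R n * (1+\<epsilon>)" using True t2 by (simp add: mult_left_mono)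
      also have "\<dots> = R n + R n * \<epsilon>" by (simp add: algebra_simps)
      also have "\<dots> \<le> R n + \<bar>y'\<bar> * \<epsilon>"
        using True Rn \<epsilon> by (intro add_left_mono mult_right_mono) auto
      finally show ?thesis using \<epsilon>2 Rn by linarith
    next
      case False
      have "R n * t \<le> R n * 1" using False t1 by (intro mult_left_mono_neg) auto
      then show ?thesis using Rn yy by simp
    qed
    then show "f r < y" using fr eq by simp
  qed
  then show ?thesis unfolding eventually_at_right_field using dpos[of N] by blast
qed

lemma partC:
  assumes ev: "eventually (\<lambda>r. y' < f r) (at_right 0)" and yy: "y < y'"
  shows "eventually (\<lambda>n. y < R n) sequentially"
proof -
  have "eventually (\<lambda>n. y' < f (d n)) sequentially"
    using filterlim_iff[THEN iffD1, OF d_at_right] ev by blast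
  moreover have "eventually (\<lambda>n. d n < 1) sequentially" by (rule ev_d) simp
  ultimately show ?thesis
  proof eventually_elim
    case (elim n)
    have lr: "ln (d n) < 0" using elim dpos[of n] by simp
    have "ln (a n) \<le> ln (b (d n))" using ab[of n "d n"] apos[of n] by simp
    then have "f (d n) \<le> R n" unfolding f_def R_def using lr by (simp add: divide_right_mono_neg)
    then show ?case using elim yy by simp
  qed
qed

lemma partB:
  assumes ev: "eventually (\<lambda>r. f r < y') (at_right 0)" and yy: "y' < y"
  shows "eventually (\<lambda>n. R n < y) sequentially"
proof -
  have y'0: "y' \<ge> 0"
  proof (rule ccontr)
    assume "\<not> y' \<ge> 0"
    then have "eventually (\<lambda>r. y' < f r) (at_right 0)" using f_lower by simp
    with ev have "eventually (\<lambda>r. False) (at_right (0::real))"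
      by eventually_elim simp
    then show False by simp
  qed
  define \<eta> where "\<eta> = (y - y') / 4"
  have \<eta>: "\<eta> > 0" using yy unfolding \<eta>_def by simp
  obtain K1 where K1: "\<And>k. k \<ge> K1 \<Longrightarrow> \<exists>m. d m \<le> (1/2)^k \<and> b ((1/2)^k) \<le> (2 powr \<eta>)^k * a m"
    using good[OF \<eta>] by blast
  obtain r0 where r0: "r0 > 0" "\<And>r. r > 0 \<Longrightarrow> r < r0 \<Longrightarrow> f r < y'"
    using ev unfolding eventually_at_right_field by auto
  define K2 where "K2 = nat \<lceil>y / (y - y' - \<eta>)\<rceil>"
  define K where "K = max K1 K2"
  define c where "c = min (min r0 1) ((1/2::real)^K)"
  have c: "c > 0" using r0 unfolding c_def by simp
  show ?thesis using ev_d[OF c]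
  proof eventually_elim
    case (elim n)
    have dn1: "d n < 1" "d n < r0" "d n < (1/2)^K" using elim unfolding c_def by auto
    obtain k where k: "k \<ge> 1" "(1/2)^k < d n" "d n \<le> (1/2)^(k-1)" using dyad[OF dpos[of n] dn1(1)] by blast
    have kK: "k > K"
    proof -
      have "(1/2::real)^k < (1/2)^K" using k(2) dn1(3) by linarith
      then show ?thesis by (simp add: power_strict_decreasing_iff)
    qed
    define \<rho> where "\<rho> = (1/2::real)^k"
    have \<rho>: "\<rho> > 0" "\<rho> < r0" using k dn1 unfolding \<rho>_def by auto
    have f\<rho>: "f \<rho> < y'" using r0(2)[OF \<rho>] .
    obtain m where m: "d m \<le> \<rho>" "b \<rho> \<le> (2 powr \<eta>)^k * a m" using K1[of k] kK unfolding K_def \<rho>_def by auto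
    have mn: "m > n"
    proof (rule ccontr)
      assume "\<not> m > n" then have "d n \<le> d m" using dmono by simp
      then show False using m k unfolding \<rho>_def by simp
    qed
    have "b \<rho> \<le> (2 powr \<eta>)^k * a n"
      using m(2) amono[of n m] mn by (meson less_imp_le mult_left_mono order.trans powr_ge_zero zero_le_power)
    then have "ln (b \<rho>) \<le> ln ((2 powr \<eta>)^k * a n)"
      using bpos[OF \<rho>(1)] apos[of n] by (subst ln_le_cancel_iff) auto
    also have "\<dots> = ln ((2 powr \<eta>)^k) + ln (a n)" using apos[of n] by (simp add: ln_mult)
    finally have lb: "ln (b \<rho>) \<le> real k * (\<eta> * ln 2) + ln (a n)" by (simp add: ln_pow_powr)
    have lrho: "ln \<rho> = - (real k * ln 2)" unfolding \<rho>_def by (rule ln_half_pow)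
    have kl: "real k * ln 2 > 0" using k by simp
    have "(real k * (\<eta> * ln 2) + ln (a n)) / ln \<rho> \<le> f \<rho>"
      unfolding f_def using lb lrho kl by (intro divide_right_mono_neg) auto
    also have "(real k * (\<eta> * ln 2) + ln (a n)) / ln \<rho> = - \<eta> + ln (a n) / ln \<rho>"
      using lrho kl k by (simp add: add_divide_distrib)
    finally have A: "ln (a n) / ln \<rho> < y' + \<eta>" using f\<rho> by simp
    have ldn: "ln (d n) < 0" using dn1 dpos[of n] by simp
    have ldn2: "ln (d n) \<le> - (real (k-1) * ln 2)"
    proof -
      have "ln (d n) \<le> ln ((1/2::real)^(k-1))" using k(3) dpos[of n] by simp
      then show ?thesis by (simp add: ln_half_pow)
    qed
    define t where "t = ln (d n) / ln \<rho>"
    have eq: "ln (a n) / ln \<rho> = R n * t" unfolding R_def t_def using ldn by simp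
    have t1: "t \<ge> real (k-1) / real k"
    proof -
      have "t = (- ln (d n)) / (real k * ln 2)" unfolding t_def lrho by (simp add: field_simps)
      also have "\<dots> \<ge> (real (k-1) * ln 2) / (real k * ln 2)"
        using ldn2 kl by (intro divide_right_mono) auto
      finally show ?thesis by simp
    qed
    show "R n < y"
    proof (cases "R n \<le> 0")
      case True then show ?thesis using y'0 yy by simp
    next
      case False
      show ?thesis
      proof (rule ccontr)
        assume "\<not> R n < y"
        then have Ry: "R n \<ge> y" by simp
        have kpos: "real k > 0" using k by simp
        have "y * (real (k-1) / real k) \<le> R n * (real (k-1) / real k)"
          using Ry by (intro mult_right_mono) auto
        also have "\<dots> \<le> R n * t" using False t1 by (intro mult_left_mono) auto
        also have "\<dots> < y' + \<eta>" using A eq by simp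
        finally have "y * real (k-1) < (y' + \<eta>) * real k" using kpos by (simp add: field_simps)
        moreover have "real (k-1) = real k - 1" using k by simp
        ultimately have "real k * (y - y' - \<eta>) < y" by (simp add: algebra_simps)
        moreover have "y - y' - \<eta> > 0" using yy unfolding \<eta>_def by simp
        ultimately have "real k < y / (y - y' - \<eta>)" by (simp add: field_simps)
        moreover have "real K2 \<ge> y / (y - y' - \<eta>)" unfolding K2_def by linarith
        moreover have "K2 < k" using kK unfolding K_def by simp
        ultimately show False by linarith
      qed
    qed
  qed
qed

lemma partD:
  assumes ev: "eventually (\<lambda>n. y' < R n) sequentially" and yy: "y < y'"
  shows "eventually (\<lambda>r. y < f r) (at_right 0)"
proof (cases "y < 0")
  case True then show ?thesis using f_lower by simp
next
  case False
  then have y0: "y \<ge> 0" by simp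
  then have y'0: "y' > 0" using yy by simp
  define \<eta> where "\<eta> = (y' - y) / 4"
  have \<eta>: "\<eta> > 0" using yy unfolding \<eta>_def by simp
  obtain K1 where K1: "\<And>k. k \<ge> K1 \<Longrightarrow> \<exists>m. d m \<le> (1/2)^k \<and> b ((1/2)^k) \<le> (2 powr \<eta>)^k * a m"
    using good[OF \<eta>] by blast
  obtain N where N: "\<And>n. n \<ge> N \<Longrightarrow> y' < R n" using ev by (auto simp: eventually_sequentially)
  obtain K3 where K3: "(1/2::real)^K3 < d N" using real_arch_pow_inv[of "d N" "1/2"] dpos[of N] by auto
  define K2 where "K2 = nat \<lceil>2 * y' / (y' - y)\<rceil>"
  define K where "K = Suc (max K1 (max K2 K3))"
  have "\<forall>r>0. r < (1/2)^K \<longrightarrow> y < f r"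
  proof (intro allI impI)
    fix r :: real assume r: "r > 0" "r < (1/2)^K"
    have "(1/2::real)^K \<le> 1" by (simp add: power_le_one)
    then have r1: "r < 1" using r(2) by linarith
    obtain k' where k': "k' \<ge> 1" "(1/2)^k' < r" "r \<le> (1/2)^(k'-1)" using dyad[OF r(1) r1] by blast
    define k where "k = k' - 1"
    have kk: "k' = Suc k" using k' unfolding k_def by simp
    have k1: "(1/2)^(Suc k) < r" "r \<le> (1/2)^k" using k' kk by auto
    have kK: "k \<ge> K"
    proof -
      have lt: "(1/2::real)^(Suc k) < (1/2)^K" using k1 r by linarith
      have "Suc k > K"
      proof (rule ccontr)
        assume "\<not> Suc k > K" then have "Suc k \<le> K" by simp
        then have "(1/2::real)^K \<le> (1/2)^(Suc k)" by (rule power_decreasing) simp_all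
        then show False using lt by linarith
      qed
      then show ?thesis by simp
    qed
    define \<rho> where "\<rho> = (1/2::real)^k"
    have \<rho>: "\<rho> > 0" "r \<le> \<rho>" using k1 unfolding \<rho>_def by auto
    have "K1 \<le> k" using kK unfolding K_def by simp
    then obtain m where m: "d m \<le> \<rho>" "b \<rho> \<le> (2 powr \<eta>)^k * a m" using K1[of k] unfolding \<rho>_def by auto
    have "K3 \<le> k" using kK unfolding K_def by simp
    then have "(1/2::real)^k \<le> (1/2)^K3" by (rule power_decreasing) simp_all
    then have \<rho>N: "\<rho> < d N" using K3 unfolding \<rho>_def by linarith
    have mN: "m \<ge> N"
    proof (rule ccontr)
      assume "\<not> m \<ge> N" then have "d N \<le> d m" using dmono by simp
      then show False using m \<rho>N by simp
    qed
    have Rm: "y' < R m" using N[OF mN] .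
    have "b r \<le> (2 powr \<eta>)^k * a m" using bmono[OF r(1) \<rho>(2)] m(2) by simp
    then have "ln (b r) \<le> ln ((2 powr \<eta>)^k * a m)"
      using bpos[OF r(1)] apos[of m] by (subst ln_le_cancel_iff) auto
    also have "\<dots> = ln ((2 powr \<eta>)^k) + ln (a m)" using apos[of m] by (simp add: ln_mult)
    finally have lb: "ln (b r) \<le> real k * (\<eta> * ln 2) + ln (a m)" by (simp add: ln_pow_powr)
    have lr: "ln r < 0" using r r1 by simp
    have lr1: "ln r > - (real (Suc k) * ln 2)"
    proof -
      have "ln ((1/2::real)^(Suc k)) < ln r" using k1 r by simp
      then show ?thesis by (simp only: ln_half_pow)
    qed
    have lr2: "ln r \<le> - (real k * ln 2)"
    proof -
      have "ln r \<le> ln ((1/2::real)^k)" using k1 r by simp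
      then show ?thesis by (simp only: ln_half_pow)
    qed
    have "f r \<ge> (real k * (\<eta> * ln 2) + ln (a m)) / ln r"
      unfolding f_def using lb lr by (intro divide_right_mono_neg) auto
    also have "(real k * (\<eta> * ln 2) + ln (a m)) / ln r = \<eta> * (real k * ln 2 / ln r) + ln (a m) / ln r"
      by (simp add: add_divide_distrib)
    finally have F: "f r \<ge> \<eta> * (real k * ln 2 / ln r) + ln (a m) / ln r" .
    have T1: "real k * ln 2 / ln r \<ge> -1"
    proof -
      have "real k * ln 2 \<le> - ln r" using lr2 by simp
      then show ?thesis using lr by (simp add: le_divide_eq)
    qed
    have ldm: "ln (d m) \<le> - (real k * ln 2)"
    proof -
      have "ln (d m) \<le> ln ((1/2::real)^k)" using m(1) dpos[of m] unfolding \<rho>_def by simp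
      then show ?thesis by (simp only: ln_half_pow)
    qed
    have "real k * ln 2 > 0" using kK unfolding K_def by simp
    then have ldm0: "ln (d m) < 0" using ldm by linarith
    define t where "t = ln (d m) / ln r"
    have eq: "ln (a m) / ln r = R m * t" unfolding R_def t_def using ldm0 by simp
    have t1: "t \<ge> real k / real (Suc k)"
    proof -
      have "t = (- ln (d m)) / (- ln r)" unfolding t_def by simp
      also have "\<dots> \<ge> (real k * ln 2) / (real (Suc k) * ln 2)"
      proof (rule frac_le)
        show "0 \<le> - ln (d m)" using ldm0 by simp
        show "real k * ln 2 \<le> - ln (d m)" using ldm by simp
        show "0 < - ln r" using lr by simp
        show "- ln r \<le> real (Suc k) * ln 2" using lr1 by simp
      qed
      finally show ?thesis by simp
    qed
    have K2k: "real K2 \<le> real k" using kK unfolding K_def by simp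
    have "2 * y' / (y' - y) \<le> real K2" unfolding K2_def by linarith
    then have "2 * y' / (y' - y) \<le> real (Suc k)" using K2k by simp
    then have "2 * y' \<le> real (Suc k) * (y' - y)" using yy by (simp add: divide_le_eq)
    then have q: "y' / real (Suc k) \<le> (y' - y) / 2" by (simp add: divide_le_eq field_simps)
    have "y' * (real k / real (Suc k)) = y' - y' / real (Suc k)" by (simp add: field_simps)
    then have "y' * (real k / real (Suc k)) \<ge> y' - (y' - y)/2" using q by linarith
    moreover have "R m * t \<ge> y' * (real k / real (Suc k))"
      by (rule mult_mono) (use Rm t1 y'0 in auto)
    ultimately have "R m * t \<ge> y' - (y' - y)/2" by linarith
    moreover have "\<eta> * (real k * ln 2 / ln r) \<ge> \<eta> * (-1)" using T1 \<eta> by (intro mult_left_mono) auto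
    ultimately have "f r \<ge> - \<eta> + (y' - (y' - y)/2)" using F eq by linarith
    moreover have "- \<eta> + (y' - (y' - y)/2) > y" unfolding \<eta>_def using yy by (simp add: field_simps)
    ultimately show "y < f r" by linarith
  qed
  then show ?thesis unfolding eventually_at_right_field by (intro exI[of _ "(1/2)^K"]) auto
qed

lemma real_between:
  fixes u v :: ereal assumes "u < v"
  obtains z :: real where "u < ereal z" "ereal z < v"
proof -
  obtain w where w: "u < w" "w < v" using dense[OF assms] by blast
  then have "w \<noteq> \<infinity>" "w \<noteq> -\<infinity>" by auto
  then obtain z where "w = ereal z" by (cases w) auto
  then show ?thesis using w that by simp
qed

lemma limsup_eq: "Limsup (at_right 0) (\<lambda>r. ereal (f r)) = limsup (\<lambda>n. ereal (R n))"
proof (rule antisym)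
  show "Limsup (at_right 0) (\<lambda>r. ereal (f r)) \<le> limsup (\<lambda>n. ereal (R n))"
    unfolding Limsup_le_iff
  proof (intro allI impI)
    fix y assume y: "y > limsup (\<lambda>n. ereal (R n))"
    show "\<forall>\<^sub>F r in at_right 0. ereal (f r) < y"
    proof (cases y)
      case (real yr)
      obtain z where z: "limsup (\<lambda>n. ereal (R n)) < ereal z" "ereal z < y" using real_between[OF y] by blast
      have "\<forall>\<^sub>F n in sequentially. ereal (R n) < ereal z"
        using Limsup_le_iff[THEN iffD1, OF order_refl] z(1) by blast
      then have "\<forall>\<^sub>F n in sequentially. R n < z" by simp
      from partA[OF this, of yr] z(2) real show ?thesis by (simp add: eventually_mono)
    qed (use y in auto)
  qed
  show "limsup (\<lambda>n. ereal (R n)) \<le> Limsup (at_right 0) (\<lambda>r. ereal (f r))"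
    unfolding Limsup_le_iff
  proof (intro allI impI)
    fix y assume y: "y > Limsup (at_right 0) (\<lambda>r. ereal (f r))"
    show "\<forall>\<^sub>F n in sequentially. ereal (R n) < y"
    proof (cases y)
      case (real yr)
      obtain z where z: "Limsup (at_right 0) (\<lambda>r. ereal (f r)) < ereal z" "ereal z < y" using real_between[OF y] by blast
      have "\<forall>\<^sub>F r in at_right 0. ereal (f r) < ereal z"
        using Limsup_le_iff[THEN iffD1, OF order_refl] z(1) by blast
      then have "\<forall>\<^sub>F r in at_right 0. f r < z" by simp
      from partB[OF this, of yr] z(2) real show ?thesis by (simp add: eventually_mono)
    qed (use y in auto)
  qed
qed

lemma liminf_eq: "Liminf (at_right 0) (\<lambda>r. ereal (f r)) = liminf (\<lambda>n. ereal (R n))"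
proof (rule antisym)
  show "liminf (\<lambda>n. ereal (R n)) \<le> Liminf (at_right 0) (\<lambda>r. ereal (f r))"
    unfolding le_Liminf_iff
  proof (intro allI impI)
    fix y assume y: "y < liminf (\<lambda>n. ereal (R n))"
    show "\<forall>\<^sub>F r in at_right 0. y < ereal (f r)"
    proof (cases y)
      case (real yr)
      obtain z where z: "y < ereal z" "ereal z < liminf (\<lambda>n. ereal (R n))" using real_between[OF y] by blast
      have "\<forall>\<^sub>F n in sequentially. ereal z < ereal (R n)"
        using le_Liminf_iff[THEN iffD1, OF order_refl] z(2) by blast
      then have "\<forall>\<^sub>F n in sequentially. z < R n" by simp
      from partD[OF this, of yr] z(1) real show ?thesis by (simp add: eventually_mono)
    qed (use y in auto)
  qed
  show "Liminf (at_right 0) (\<lambda>r. ereal (f r)) \<le> liminf (\<lambda>n. ereal (R n))"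
    unfolding le_Liminf_iff
  proof (intro allI impI)
    fix y assume y: "y < Liminf (at_right 0) (\<lambda>r. ereal (f r))"
    show "\<forall>\<^sub>F n in sequentially. y < ereal (R n)"
    proof (cases y)
      case (real yr)
      obtain z where z: "y < ereal z" "ereal z < Liminf (at_right 0) (\<lambda>r. ereal (f r))" using real_between[OF y] by blast
      have "\<forall>\<^sub>F r in at_right 0. ereal z < ereal (f r)"
        using le_Liminf_iff[THEN iffD1, OF order_refl] z(2) by blast
      then have "\<forall>\<^sub>F r in at_right 0. z < f r" by simp
      from partC[OF this, of yr] z(1) real show ?thesis by (simp add: eventually_mono)
    qed (use y in auto)
  qed
qed

end


lemma prefix_of_length[simp]: "length (prefix_of s n) = n"
  by (simp add: prefix_of_def)
lemma prefix_of_Suc: "prefix_of s (Suc n) = prefix_of s n @ [s n]"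
  by (simp add: prefix_of_def)
lemma prefix_of_0[simp]: "prefix_of s 0 = []"
  by (simp add: prefix_of_def)
lemma take_prefix_of: "take m (prefix_of s n) = prefix_of s (min m n)"
  by (cases "m \<le> n") (auto simp: prefix_of_def take_map min_def)
lemma butlast_prefix_of: "butlast (prefix_of s (Suc n)) = prefix_of s n"
  by (simp add: prefix_of_Suc)
lemma nth_prefix_of: "i < n \<Longrightarrow> prefix_of s n ! i = s i"
  by (simp add: prefix_of_def)

locale MS =
  fixes \<Sigma> :: "'i list set" and E :: "'i list \<Rightarrow> 'a::complete_space set"
    and \<mu> :: "'a set \<Rightarrow> ennreal"
  assumes dbl: "doubling_space TYPE('a)"
    and mc: "moran_construction \<Sigma> E"
    and im: "is_measure \<mu>"
    and supp: "support \<mu> \<subseteq> limit_set \<Sigma> E"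
begin

lemma ct: "codetree \<Sigma>" using mc by (simp add: moran_construction_def)
lemma root: "[] \<in> \<Sigma>" using ct by (simp add: codetree_def)
lemma butlast_in: "w \<in> \<Sigma> \<Longrightarrow> butlast w \<in> \<Sigma>"
  using ct by (cases "w = []") (auto simp: codetree_def)
lemma offs: "w \<in> \<Sigma> \<Longrightarrow> finite (offspring \<Sigma> w) \<and> offspring \<Sigma> w \<noteq> {}"
  using ct by (simp add: codetree_def)
lemma cpt: "w \<in> \<Sigma> \<Longrightarrow> compact (E w)" using mc by (simp add: moran_construction_def)
lemma dpos: "w \<in> \<Sigma> \<Longrightarrow> diameter (E w) > 0" using mc by (simp add: moran_construction_def)
lemma nest1: "w \<in> \<Sigma> \<Longrightarrow> w \<noteq> [] \<Longrightarrow> E w \<subseteq> E (butlast w)"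
  using mc by (simp add: moran_construction_def)
lemma M2: "s \<in> infinite_words \<Sigma> \<Longrightarrow> (\<lambda>n. diameter (E (prefix_of s n))) \<longlonglongrightarrow> 0"
  using mc by (simp add: moran_construction_def)
lemma M3: "w @ [a] \<in> \<Sigma> \<Longrightarrow> w @ [b] \<in> \<Sigma> \<Longrightarrow> a \<noteq> b \<Longrightarrow> E (w @ [a]) \<inter> E (w @ [b]) = {}"
  using mc by (simp add: moran_construction_def)
lemma M4: "\<exists>C0>0. \<forall>w \<in> \<Sigma>. \<exists>x \<in> E w. cball x (C0 * diameter (E w)) \<subseteq> E w"
  using mc by (simp add: moran_construction_def)
lemma M5: "\<epsilon> > 0 \<Longrightarrow> \<exists>N. \<forall>s \<in> infinite_words \<Sigma>. \<forall>n \<ge> N.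
        \<bar>ln (diameter (E (prefix_of s n))) /
           ln (Min (diameter ` E ` offspring \<Sigma> (prefix_of s n))) - 1\<bar> < \<epsilon>"
  using mc by (simp add: moran_construction_def)

lemma ne: "w \<in> \<Sigma> \<Longrightarrow> E w \<noteq> {}" using dpos[of w] by auto
lemma bdd: "w \<in> \<Sigma> \<Longrightarrow> bounded (E w)" using cpt compact_imp_bounded by blast

lemma take_in: "w \<in> \<Sigma> \<Longrightarrow> take n w \<in> \<Sigma>"
proof (induction w rule: rev_induct)
  case Nil then show ?case by simp
next
  case (snoc x xs)
  have "xs \<in> \<Sigma>" using butlast_in[OF snoc.prems] by simp
  then show ?case using snoc by (cases "n \<le> length xs") auto
qed

lemma E_take: "w \<in> \<Sigma> \<Longrightarrow> E w \<subseteq> E (take n w)"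
proof (induction w rule: rev_induct)
  case Nil then show ?case by simp
next
  case (snoc x xs)
  have xs: "xs \<in> \<Sigma>" using butlast_in[OF snoc.prems] by simp
  have "E (xs @ [x]) \<subseteq> E xs" using nest1[OF snoc.prems] by simp
  then show ?case using snoc xs by (cases "n \<le> length xs") auto
qed

lemma diam_mono: "A \<subseteq> B \<Longrightarrow> bounded B \<Longrightarrow> diameter A \<le> diameter B"
  by (rule diameter_subset)

lemma d_take: "w \<in> \<Sigma> \<Longrightarrow> diameter (E w) \<le> diameter (E (take n w))"
  by (meson E_take bdd diameter_subset take_in)

lemma disj_incomp:
  assumes w: "w \<in> \<Sigma>" and v: "v \<in> \<Sigma>" and i: "i < length w" "i < length v"
    and t: "take i w = take i v" and d: "w ! i \<noteq> v ! i"
  shows "E w \<inter> E v = {}"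
proof -
  have a: "take (Suc i) w = take i v @ [w ! i]" using i t by (simp add: take_Suc_conv_app_nth)
  have b: "take (Suc i) v = take i v @ [v ! i]" using i by (simp add: take_Suc_conv_app_nth)
  have "E (take i v @ [w ! i]) \<inter> E (take i v @ [v ! i]) = {}"
    using M3 a b take_in[OF w] take_in[OF v] d by metis
  moreover have "E w \<subseteq> E (take i v @ [w ! i])" using E_take[OF w, of "Suc i"] a by simp
  moreover have "E v \<subseteq> E (take i v @ [v ! i])" using E_take[OF v, of "Suc i"] b by simp
  ultimately show ?thesis by blast
qed

lemma comparable:
  assumes w: "w \<in> \<Sigma>" and v: "v \<in> \<Sigma>" and z: "z \<in> E w" "z \<in> E v" and le: "length w \<le> length v"
  shows "take (length w) v = w"
proof (rule ccontr)
  assume ne: "take (length w) v \<noteq> w"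
  have "\<exists>i < length w. w ! i \<noteq> v ! i"
  proof (rule ccontr)
    assume "\<not> ?thesis"
    then have "take (length w) v = w" using le by (intro nth_equalityI) auto
    then show False using ne by simp
  qed
  then obtain i0 where i0: "i0 < length w \<and> w ! i0 \<noteq> v ! i0" by blast
  define i where "i = (LEAST i. i < length w \<and> w ! i \<noteq> v ! i)"
  have i: "i < length w" "w ! i \<noteq> v ! i" using LeastI[of "\<lambda>i. i < length w \<and> w ! i \<noteq> v ! i", OF i0]
    unfolding i_def by auto
  have mi: "\<And>j. j < i \<Longrightarrow> w ! j = v ! j"
    using not_less_Least[of _ "\<lambda>i. i < length w \<and> w ! i \<noteq> v ! i"] i(1) unfolding i_def
    by (meson less_trans)
  have "take i w = take i v"
    using i(1) le mi by (intro nth_equalityI) auto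
  then have "E w \<inter> E v = {}" using disj_incomp[OF w v] i le by auto
  then show False using z by auto
qed

end


context MS begin

lemma level_fin: "finite {w \<in> \<Sigma>. length w = n}"
proof (induction n)
  case 0 then show ?case by (simp add: Collect_conj_eq)
next
  case (Suc n)
  have "{w \<in> \<Sigma>. length w = Suc n} \<subseteq> (\<Union>p\<in>{w \<in> \<Sigma>. length w = n}. offspring \<Sigma> p)"
  proof
    fix w assume w: "w \<in> {w \<in> \<Sigma>. length w = Suc n}"
    then have "w \<noteq> []" by auto
    then have "w = butlast w @ [last w]" by simp
    moreover have "butlast w \<in> \<Sigma>" using butlast_in w by auto
    ultimately show "w \<in> (\<Union>p\<in>{w \<in> \<Sigma>. length w = n}. offspring \<Sigma> p)"
      using w unfolding offspring_def by (intro UN_I[of "butlast w"]) auto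
  qed
  moreover have "finite (\<Union>p\<in>{w \<in> \<Sigma>. length w = n}. offspring \<Sigma> p)"
    using Suc offs by auto
  ultimately show ?case by (rule finite_subset)
qed

lemma level_le_fin: "finite {w \<in> \<Sigma>. length w \<le> n}"
proof -
  have "{w \<in> \<Sigma>. length w \<le> n} = (\<Union>m\<in>{..n}. {w \<in> \<Sigma>. length w = m})" by auto
  then show ?thesis using level_fin by simp
qed

lemma ext_inf:
  assumes w: "w \<in> \<Sigma>"
  shows "\<exists>s\<in>infinite_words \<Sigma>. prefix_of s (length w) = w"
proof -
  define ch where "ch p = (SOME v. v \<in> offspring \<Sigma> p)" for p
  have ch: "ch p \<in> offspring \<Sigma> p" if "p \<in> \<Sigma>" for p
    unfolding ch_def using offs[OF that] by (metis ex_in_conv someI_ex)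
  define W where "W n = (ch ^^ n) w" for n
  have W: "W n \<in> \<Sigma> \<and> length (W n) = length w + n" for n
  proof (induction n)
    case 0 then show ?case using w by (simp add: W_def)
  next
    case (Suc n)
    have "W (Suc n) = ch (W n)" by (simp add: W_def)
    then show ?case using ch[of "W n"] Suc unfolding offspring_def by auto
  qed
  have Ws: "\<exists>a. W (Suc n) = W n @ [a]" for n
  proof -
    have "W (Suc n) = ch (W n)" by (simp add: W_def)
    then show ?thesis using ch[of "W n"] W[of n] unfolding offspring_def by auto
  qed
  have Wt: "m \<le> n \<Longrightarrow> take (length w + m) (W n) = W m" for m n
  proof (induction n)
    case 0 then show ?case using W[of 0] by simp
  next
    case (Suc n)
    show ?case
    proof (cases "m = Suc n")
      case True then show ?thesis using W[of "Suc n"] by simp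
    next
      case False
      then have mn: "m \<le> n" using Suc by simp
      obtain a where a: "W (Suc n) = W n @ [a]" using Ws by blast
      have "take (length w + m) (W (Suc n)) = take (length w + m) (W n)"
        using a W[of n] mn by simp
      then show ?thesis using Suc.IH[OF mn] by simp
    qed
  qed
  define s where "s i = W (Suc i) ! i" for i
  have ps: "prefix_of s n = take n (W n)" for n
  proof (rule nth_equalityI)
    show "length (prefix_of s n) = length (take n (W n))" using W[of n] by simp
    fix i assume i: "i < length (prefix_of s n)"
    then have i': "i < n" by simp
    have "W (Suc i) = take (length w + Suc i) (W n)" using Wt[of "Suc i" n] i' by simp
    then have "s i = W n ! i" unfolding s_def by simp
    then show "prefix_of s n ! i = take n (W n) ! i" using i' by (simp add: nth_prefix_of)
  qed
  have "s \<in> infinite_words \<Sigma>"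
    unfolding infinite_words_def using ps take_in W by auto
  moreover have "prefix_of s (length w) = w"
    using ps[of "length w"] Wt[of 0 "length w"] by (simp add: W_def)
  ultimately show ?thesis by blast
qed

lemma pre_in: "s \<in> infinite_words \<Sigma> \<Longrightarrow> prefix_of s n \<in> \<Sigma>"
  by (simp add: infinite_words_def)

lemma pre_sub: "s \<in> infinite_words \<Sigma> \<Longrightarrow> m \<le> n \<Longrightarrow> E (prefix_of s n) \<subseteq> E (prefix_of s m)"
  using E_take[OF pre_in, of s n m] by (simp add: take_prefix_of min_def)

lemma d_antimono: "s \<in> infinite_words \<Sigma> \<Longrightarrow> m \<le> n \<Longrightarrow>
    diameter (E (prefix_of s n)) \<le> diameter (E (prefix_of s m))"
  using pre_sub bdd pre_in diameter_subset by metis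

lemma moran_point_in:
  assumes s: "s \<in> infinite_words \<Sigma>"
  shows "moran_point E s \<in> E (prefix_of s n)"
proof -
  let ?S = "\<lambda>n. E (prefix_of s n)"
  have h1: "\<And>n. closed (?S n)" using cpt[OF pre_in[OF s]] compact_imp_closed by blast
  have h2: "\<And>n. ?S n \<noteq> {}" using ne[OF pre_in[OF s]] by blast
  have h3: "\<And>m n. m \<le> n \<Longrightarrow> ?S n \<subseteq> ?S m" using pre_sub[OF s] by blast
  have h4: "\<exists>n. \<forall>x\<in>?S n. \<forall>y\<in>?S n. dist x y < e" if e: "e > 0" for e :: real
  proof -
    obtain n where n: "diameter (?S n) < e"
      using order_tendstoD(2)[OF M2[OF s] e] by (auto simp: eventually_sequentially)
    show "\<exists>n. \<forall>x\<in>?S n. \<forall>y\<in>?S n. dist x y < e"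
      using diameter_bounded_bound[OF bdd[OF pre_in[OF s]]] n by (meson le_less_trans)
  qed
  obtain x where x: "\<And>n. x \<in> ?S n" using decreasing_closed_nest[of ?S, OF h1 h2 h3 h4] by blast
  have uniq: "y = x" if y: "\<And>n. y \<in> ?S n" for y
  proof (rule ccontr)
    assume "y \<noteq> x" then have "dist y x > 0" by simp
    then obtain n where n: "diameter (?S n) < dist y x"
      using order_tendstoD(2)[OF M2[OF s], of "dist y x"] by (auto simp: eventually_sequentially)
    have "dist y x \<le> diameter (?S n)"
      using diameter_bounded_bound[OF bdd[OF pre_in[OF s]] y x] .
    then show False using n by simp
  qed
  have "moran_point E s = x" unfolding moran_point_def
    by (rule the_equality) (use x uniq in auto)
  then show ?thesis using x by simp
qed

lemma limit_chain:
  assumes z: "z \<in> limit_set \<Sigma> E"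
  shows "\<exists>s\<in>infinite_words \<Sigma>. \<forall>n. z \<in> E (prefix_of s n)"
proof -
  have ex: "\<exists>w. w \<in> \<Sigma> \<and> length w = n \<and> z \<in> E w" for n
    using z unfolding limit_set_def level_def by blast
  define W where "W n = (SOME w. w \<in> \<Sigma> \<and> length w = n \<and> z \<in> E w)" for n
  have W: "W n \<in> \<Sigma> \<and> length (W n) = n \<and> z \<in> E (W n)" for n
    unfolding W_def using someI_ex[OF ex] .
  have Wt: "take n (W (Suc n)) = W n" for n
    using comparable[of "W n" "W (Suc n)" z] W[of n] W[of "Suc n"] by simp
  define s where "s i = W (Suc i) ! i" for i
  have ps: "prefix_of s n = W n" for n
  proof (induction n)
    case 0 then show ?case using W[of 0] by simp
  next
    case (Suc n)
    have "W (Suc n) = take n (W (Suc n)) @ [W (Suc n) ! n]"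
      using W[of "Suc n"] by (metis lessI take_Suc_conv_app_nth take_all order_refl)
    then show ?case using Suc Wt[of n] by (simp add: prefix_of_Suc s_def)
  qed
  have "s \<in> infinite_words \<Sigma>" unfolding infinite_words_def using ps W by simp
  moreover have "\<forall>n. z \<in> E (prefix_of s n)" using ps W by simp
  ultimately show ?thesis by blast
qed

lemma child_min:
  assumes s: "s \<in> infinite_words \<Sigma>"
  shows "Min (diameter ` E ` offspring \<Sigma> (prefix_of s n)) \<le> diameter (E (prefix_of s (Suc n)))"
    and "Min (diameter ` E ` offspring \<Sigma> (prefix_of s n)) > 0"
proof -
  have fin: "finite (diameter ` E ` offspring \<Sigma> (prefix_of s n))" using offs[OF pre_in[OF s]] by simp
  have "prefix_of s (Suc n) \<in> offspring \<Sigma> (prefix_of s n)"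
    unfolding offspring_def using pre_in[OF s, of "Suc n"] by (simp add: prefix_of_Suc)
  then show "Min (diameter ` E ` offspring \<Sigma> (prefix_of s n)) \<le> diameter (E (prefix_of s (Suc n)))"
    using fin by (intro Min_le) auto
  have "Min (diameter ` E ` offspring \<Sigma> (prefix_of s n)) \<in> diameter ` E ` offspring \<Sigma> (prefix_of s n)"
    using fin offs[OF pre_in[OF s]] by (intro Min_in) auto
  then show "Min (diameter ` E ` offspring \<Sigma> (prefix_of s n)) > 0"
    using dpos unfolding offspring_def by auto
qed

definition cyl :: "real \<Rightarrow> 'i list set" where
  "cyl \<rho> = {w \<in> \<Sigma>. w \<noteq> [] \<and> diameter (E w) \<le> \<rho> \<and> diameter (E (butlast w)) > \<rho>}"

lemma cyl_disj_aux:
  assumes v: "v \<in> cyl \<rho>" and w: "w \<in> cyl \<rho>" and z: "z \<in> E v" "z \<in> E w" and le: "length v \<le> length w"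
  shows "v = w"
proof -
  have vS: "v \<in> \<Sigma>" and wS: "w \<in> \<Sigma>" using v w by (auto simp: cyl_def)
  have t: "take (length v) w = v" using comparable[OF vS wS z le] .
  show ?thesis
  proof (cases "length v = length w")
    case True then show ?thesis using t by simp
  next
    case False
    then have lt: "length v < length w" using le by simp
    have "take (length v) (butlast w) = v" using t lt by (simp add: take_butlast)
    then have "E (butlast w) \<subseteq> E v" using E_take[OF butlast_in[OF wS], of "length v"] by simp
    then have "diameter (E (butlast w)) \<le> diameter (E v)" using bdd[OF vS] by (rule diameter_subset)
    then show ?thesis using v w by (auto simp: cyl_def)
  qed
qed

lemma cyl_disj: "v \<in> cyl \<rho> \<Longrightarrow> w \<in> cyl \<rho> \<Longrightarrow> v \<noteq> w \<Longrightarrow> E v \<inter> E w = {}"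
  using cyl_disj_aux by (metis disjoint_iff nat_le_linear)

lemma cyl_of_word:
  assumes s: "s \<in> infinite_words \<Sigma>" and \<rho>: "0 < \<rho>" "\<rho> < diameter (E [])"
  shows "\<exists>m. prefix_of s m \<in> cyl \<rho>"
proof -
  obtain n0 where "diameter (E (prefix_of s n0)) < \<rho>"
    using order_tendstoD(2)[OF M2[OF s] \<rho>(1)] by (auto simp: eventually_sequentially)
  then have ex: "diameter (E (prefix_of s n0)) \<le> \<rho>" by simp
  define m where "m = (LEAST m. diameter (E (prefix_of s m)) \<le> \<rho>)"
  have m: "diameter (E (prefix_of s m)) \<le> \<rho>" unfolding m_def by (rule LeastI[of _ n0]) (rule ex)
  have m0: "m \<noteq> 0" using m \<rho> by (cases m) auto
  then obtain p where p: "m = Suc p" by (cases m) auto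
  have "\<not> diameter (E (prefix_of s p)) \<le> \<rho>" unfolding m_def by (rule not_less_Least) (use p m_def in auto)
  moreover have "prefix_of s m \<noteq> []" using m0 by (metis prefix_of_length length_0_conv)
  ultimately have "prefix_of s m \<in> cyl \<rho>" using m p pre_in[OF s] by (auto simp: cyl_def butlast_prefix_of)
  then show ?thesis by blast
qed

end


lemma alg_M5:
  fixes d m \<epsilon> :: real
  assumes m: "0 < m" "m < 1" and e: "0 < \<epsilon>" "\<epsilon> < 1" and d: "d > 0"
    and r: "\<bar>ln d / ln m - 1\<bar> < \<epsilon>"
  shows "d < 1 \<and> ln m \<ge> ln d / (1 - \<epsilon>)"
proof -
  have lm: "ln m < 0" using m by simp
  define q where "q = ln d / ln m"
  have q: "q > 1 - \<epsilon>" using r unfolding q_def by linarith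
  have q0: "q > 0" using q e by simp
  have ld: "ln d = q * ln m" unfolding q_def using lm by simp
  have "ln d < 0" using ld q0 lm by (simp add: mult_pos_neg)
  then have "d < 1" using d by simp
  moreover have "ln d / (1 - \<epsilon>) \<le> ln m"
  proof -
    have "ln d / (1 - \<epsilon>) = ln m * (q / (1 - \<epsilon>))" using ld by simp
    also have "\<dots> \<le> ln m * 1"
    proof (rule mult_left_mono_neg)
      show "1 \<le> q / (1 - \<epsilon>)" using q e by simp
    qed (use lm in simp)
    finally show ?thesis by simp
  qed
  ultimately show ?thesis by simp
qed

context MS begin

subsection \<open>Measure basics\<close>

lemma om: "outer_measure \<mu>" using im by (simp add: is_measure_def borel_regular_outer_measure_def)
lemma mu_empty[simp]: "\<mu> {} = 0" using om by (simp add: outer_measure_def)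
lemma mu_mono: "A \<subseteq> B \<Longrightarrow> \<mu> A \<le> \<mu> B" using om by (simp add: outer_measure_def)
lemma mu_count: "\<mu> (\<Union>n. A n) \<le> (\<Sum>n. \<mu> (A n))" using om by (simp add: outer_measure_def)
lemma mu_fin: "bounded A \<Longrightarrow> \<mu> A < \<infinity>" using im by (simp add: is_measure_def)
lemma mu_meas: "closed B \<Longrightarrow> om_measurable \<mu> B"
  using im borel_closed by (auto simp: is_measure_def borel_regular_outer_measure_def)

lemma mu_un: "\<mu> (A \<union> B) \<le> \<mu> A + \<mu> B"
proof -
  define X where "X n = (if n = 0 then A else if n = 1 then B else {})" for n :: nat
  have "(\<Union>n. X n) = A \<union> B"
  proof
    show "(\<Union>n. X n) \<subseteq> A \<union> B" unfolding X_def by auto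
    show "A \<union> B \<subseteq> (\<Union>n. X n)"
    proof
      fix x assume "x \<in> A \<union> B"
      then show "x \<in> (\<Union>n. X n)"
      proof
        assume "x \<in> A" then show ?thesis by (intro UN_I[of 0]) (auto simp: X_def)
      next
        assume "x \<in> B" then show ?thesis by (intro UN_I[of 1]) (auto simp: X_def)
      qed
    qed
  qed
  moreover have "(\<Sum>n. \<mu> (X n)) = (\<Sum>n\<in>{0,1}. \<mu> (X n))"
    by (rule suminf_finite) (auto simp: X_def)
  ultimately show ?thesis using mu_count[of X] by (simp add: X_def)
qed

lemma mu_UN_fin: "finite F \<Longrightarrow> \<mu> (\<Union>i\<in>F. X i) \<le> (\<Sum>i\<in>F. \<mu> (X i))"
proof (induction F rule: finite_induct)
  case empty then show ?case by simp
next
  case (insert a F)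
  have "\<mu> (\<Union>i\<in>insert a F. X i) = \<mu> (X a \<union> (\<Union>i\<in>F. X i))" by simp
  also have "\<dots> \<le> \<mu> (X a) + \<mu> (\<Union>i\<in>F. X i)" by (rule mu_un)
  also have "\<dots> \<le> \<mu> (X a) + (\<Sum>i\<in>F. \<mu> (X i))" using insert by (intro add_left_mono) auto
  finally show ?case using insert by simp
qed

lemma mu_add_disj:
  assumes "finite F" "\<And>i. i \<in> F \<Longrightarrow> closed (X i)"
    "\<And>i j. i \<in> F \<Longrightarrow> j \<in> F \<Longrightarrow> i \<noteq> j \<Longrightarrow> X i \<inter> X j = {}"
  shows "(\<Sum>i\<in>F. \<mu> (X i)) = \<mu> (\<Union>i\<in>F. X i)"
  using assms
proof (induction F rule: finite_induct)
  case empty then show ?case by simp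
next
  case (insert a F)
  let ?U = "\<Union>i\<in>F. X i"
  have disj: "?U \<inter> X a = {}" using insert.prems(2) insert.hyps(2) by fastforce
  have m: "om_measurable \<mu> (X a)" using insert.prems(1) mu_meas by simp
  have "\<mu> (X a \<union> ?U) = \<mu> ((X a \<union> ?U) \<inter> X a) + \<mu> ((X a \<union> ?U) - X a)"
    using m unfolding om_measurable_def by blast
  also have "(X a \<union> ?U) \<inter> X a = X a" by auto
  also have "(X a \<union> ?U) - X a = ?U" using disj by auto
  finally have "\<mu> (\<Union>i\<in>insert a F. X i) = \<mu> (X a) + \<mu> ?U" by simp
  moreover have "(\<Sum>i\<in>F. \<mu> (X i)) = \<mu> ?U" using insert by auto
  ultimately show ?case using insert.hyps by simp
qed

subsection \<open>Doubling\<close>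

lemma dblN: "\<exists>N::nat. \<forall>(x::'a) (r::real). r > 0 \<longrightarrow>
        (\<exists>F. finite F \<and> card F \<le> N \<and> cball x r \<subseteq> (\<Union>y\<in>F. cball y (r/2)))"
  using dbl by (simp add: doubling_space_def)

definition NN :: nat where "NN = (SOME N::nat. \<forall>(x::'a) (r::real). r > 0 \<longrightarrow>
        (\<exists>F. finite F \<and> card F \<le> N \<and> cball x r \<subseteq> (\<Union>y\<in>F. cball y (r/2))))"

lemma NN: "r > 0 \<Longrightarrow> \<exists>F. finite F \<and> card F \<le> NN \<and> cball (x::'a) r \<subseteq> (\<Union>y\<in>F. cball y (r/2))"
  using someI_ex[OF dblN] unfolding NN_def by blast

lemma cover_iter:
  assumes r: "r > 0"
  shows "\<exists>F. finite F \<and> card F \<le> NN^j \<and> cball (x::'a) r \<subseteq> (\<Union>y\<in>F. cball y (r/2^j))"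
proof (induction j)
  case 0 then show ?case by (intro exI[of _ "{x}"]) auto
next
  case (Suc j)
  then obtain F where F: "finite F" "card F \<le> NN^j" "cball x r \<subseteq> (\<Union>y\<in>F. cball y (r/2^j))" by blast
  have "\<forall>y::'a. \<exists>G. finite G \<and> card G \<le> NN \<and> cball y (r/2^j) \<subseteq> (\<Union>g\<in>G. cball g (r/2^j/2))"
  proof
    fix y :: 'a
    have "r/2^j > 0" using r by simp
    from NN[OF this, of y] show "\<exists>G. finite G \<and> card G \<le> NN \<and> cball y (r/2^j) \<subseteq> (\<Union>g\<in>G. cball g (r/2^j/2))" .
  qed
  then have "\<exists>G. \<forall>y::'a. finite (G y) \<and> card (G y) \<le> NN \<and> cball y (r/2^j) \<subseteq> (\<Union>g\<in>G y. cball g (r/2^j/2))"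
    by (rule choice)
  then obtain G where G: "\<And>y::'a. finite (G y) \<and> card (G y) \<le> NN \<and> cball y (r/2^j) \<subseteq> (\<Union>g\<in>G y. cball g (r/2^j/2))"
    by blast
  define F' where "F' = (\<Union>y\<in>F. G y)"
  have "finite F'" unfolding F'_def using F G by auto
  moreover have "card F' \<le> NN^(Suc j)"
  proof -
    have "card F' \<le> (\<Sum>y\<in>F. card (G y))" unfolding F'_def using F(1) by (rule card_UN_le)
    also have "\<dots> \<le> (\<Sum>y\<in>F. NN)" using G by (intro sum_mono) auto
    also have "\<dots> = card F * NN" by simp
    also have "\<dots> \<le> NN^j * NN" using F(2) by simp
    finally show ?thesis by (simp add: mult.commute)
  qed
  moreover have "cball x r \<subseteq> (\<Union>y\<in>F'. cball y (r/2^(Suc j)))"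
  proof
    fix z assume "z \<in> cball x r"
    then obtain y where y: "y \<in> F" "z \<in> cball y (r/2^j)" using F(3) by blast
    then obtain g where "g \<in> G y" "z \<in> cball g (r/2^j/2)" using G[of y] by blast
    then show "z \<in> (\<Union>y\<in>F'. cball y (r/2^(Suc j)))" unfolding F'_def using y by (auto simp: field_simps)
  qed
  ultimately show ?case by blast
qed

lemma packing:
  assumes P: "P \<subseteq> cball (x::'a) R" and R: "R > 0"
    and sep: "\<And>p q. p \<in> P \<Longrightarrow> q \<in> P \<Longrightarrow> p \<noteq> q \<Longrightarrow> dist p q > t"
    and j: "R / 2^j \<le> t / 2"
  shows "finite P \<and> card P \<le> NN^j"
proof -
  obtain F where F: "finite F" "card F \<le> NN^j" "cball x R \<subseteq> (\<Union>y\<in>F. cball y (R/2^j))"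
    using cover_iter[OF R] by blast
  define \<phi> where "\<phi> p = (SOME g. g \<in> F \<and> p \<in> cball g (R/2^j))" for p
  have \<phi>: "\<phi> p \<in> F \<and> p \<in> cball (\<phi> p) (R/2^j)" if "p \<in> P" for p
  proof -
    have "\<exists>g. g \<in> F \<and> p \<in> cball g (R/2^j)" using that P F(3) by blast
    then show ?thesis unfolding \<phi>_def by (rule someI_ex)
  qed
  have inj: "inj_on \<phi> P"
  proof (rule inj_onI)
    fix p q assume pq: "p \<in> P" "q \<in> P" "\<phi> p = \<phi> q"
    have "dist p q \<le> dist p (\<phi> p) + dist (\<phi> p) q" by (rule dist_triangle)
    also have "dist (\<phi> p) q = dist q (\<phi> q)" using pq(3) by (simp add: dist_commute)
    also have "dist p (\<phi> p) + dist q (\<phi> q) \<le> R/2^j + R/2^j"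
      using \<phi>[OF pq(1)] \<phi>[OF pq(2)] by (intro add_mono) (auto simp: dist_commute)
    also have "\<dots> \<le> t" using j by linarith
    finally show "p = q" using sep[OF pq(1,2)] by force
  qed
  have img: "\<phi> ` P \<subseteq> F" using \<phi> by auto
  have "finite (\<phi> ` P)" using img F(1) finite_subset by blast
  then have "finite P" using finite_imageD inj by blast
  moreover have "card P \<le> card F" using card_inj_on_le[OF inj img F(1)] .
  ultimately show ?thesis using F(2) by simp
qed

lemma null_off_supp:
  assumes K: "bounded K"
  shows "\<mu> (K - support \<mu>) = 0"
proof -
  obtain x0 e where e: "K \<subseteq> cball x0 e" "0 \<le> e"
    using K unfolding bounded_subset_cball by blast
  define R where "R = e + 1"
  have R: "R > 0" "K \<subseteq> cball x0 R" using e unfolding R_def by auto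
  have "\<forall>j. \<exists>F. finite F \<and> card F \<le> NN^j \<and> cball x0 R \<subseteq> (\<Union>y\<in>F. cball y (R/2^j))"
    using cover_iter[OF R(1)] by blast
  then have "\<exists>F. \<forall>j. finite (F j) \<and> card (F j) \<le> NN^j \<and> cball x0 R \<subseteq> (\<Union>y\<in>F j. cball y (R/2^j))"
    by (rule choice)
  then obtain F where F: "\<And>j. finite (F j) \<and> cball x0 R \<subseteq> (\<Union>y\<in>F j. cball y (R/2^j))"
    by blast
  define Bj where "Bj j = (\<Union>c\<in>{c\<in>F j. \<mu> (cball c (R/2^j)) = 0}. cball c (R/2^j))" for j
  have B0: "\<mu> (Bj j) = 0" for j
  proof -
    have "\<mu> (Bj j) \<le> (\<Sum>c\<in>{c\<in>F j. \<mu> (cball c (R/2^j)) = 0}. \<mu> (cball c (R/2^j)))"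
      unfolding Bj_def using F[of j] by (intro mu_UN_fin) auto
    also have "\<dots> = 0" by simp
    finally show ?thesis by simp
  qed
  have sub: "K - support \<mu> \<subseteq> (\<Union>j. Bj j)"
  proof
    fix z assume z: "z \<in> K - support \<mu>"
    then obtain r where r: "r > 0" "\<not> \<mu> (ball z r) > 0" unfolding support_def by auto
    then have r0: "\<mu> (ball z r) = 0" by (simp add: not_gr_zero)
    obtain j where j: "(1/2::real)^j < r / (2*R)" using real_arch_pow_inv[of "r/(2*R)" "1/2"] r R by auto
    have j2: "2 * (R / 2^j) < r"
    proof -
      have "R / 2^j = R * (1/2)^j" by (simp add: power_one_over)
      also have "\<dots> < R * (r / (2*R))" using j R by (intro mult_strict_left_mono) auto
      also have "R * (r / (2*R)) = r / 2" using R by simp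
      finally show ?thesis by linarith
    qed
    obtain c where c: "c \<in> F j" "z \<in> cball c (R/2^j)" using F[of j] z R by blast
    have "cball c (R/2^j) \<subseteq> ball z r"
    proof
      fix w assume "w \<in> cball c (R/2^j)"
      then have "dist c w \<le> R/2^j" "dist z c \<le> R/2^j"
        using c by (auto simp: dist_commute)
      moreover have "dist z w \<le> dist z c + dist c w" by (rule dist_triangle)
      ultimately show "w \<in> ball z r" using j2 by simp
    qed
    then have "\<mu> (cball c (R/2^j)) \<le> \<mu> (ball z r)" by (rule mu_mono)
    then have "\<mu> (cball c (R/2^j)) = 0" using r0 by simp
    then have "z \<in> Bj j" unfolding Bj_def using c by blast
    then show "z \<in> (\<Union>j. Bj j)" by blast
  qed
  have "\<mu> (K - support \<mu>) \<le> \<mu> (\<Union>j. Bj j)" using sub by (rule mu_mono)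
  also have "\<dots> \<le> (\<Sum>j. \<mu> (Bj j))" by (rule mu_count)
  also have "\<dots> = 0" using B0 by simp
  finally show ?thesis by simp
qed

end


context MS begin

lemma ratio_ev:
  assumes s: "s \<in> infinite_words \<Sigma>" and e: "\<epsilon> > 0"
  shows "eventually (\<lambda>n. ln (diameter (E (prefix_of s (Suc n)))) \<ge> (1+\<epsilon>) * ln (diameter (E (prefix_of s n)))) sequentially"
proof -
  let ?d = "\<lambda>n. diameter (E (prefix_of s n))"
  define e' where "e' = \<epsilon> / (1 + \<epsilon>)"
  have e': "0 < e'" "e' < 1" using e unfolding e'_def by auto
  have e'2: "1 / (1 - e') = 1 + \<epsilon>" unfolding e'_def using e by (simp add: field_simps)
  obtain N where N: "\<And>n. n \<ge> N \<Longrightarrow> \<bar>ln (?d n) / ln (Min (diameter ` E ` offspring \<Sigma> (prefix_of s n))) - 1\<bar> < e'"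
    using M5[OF e'(1)] s by blast
  have ev1: "eventually (\<lambda>n. ?d n < 1) sequentially" using order_tendstoD(2)[OF M2[OF s]] by simp
  have ev2: "eventually (\<lambda>n. n \<ge> N) sequentially" by (rule eventually_ge_at_top)
  show ?thesis using ev1 ev2
  proof eventually_elim
    case (elim n)
    let ?m = "Min (diameter ` E ` offspring \<Sigma> (prefix_of s n))"
    have m: "?m \<le> ?d (Suc n)" "?m > 0" using child_min[OF s] by auto
    have dd: "?d (Suc n) \<le> ?d n" using d_antimono[OF s] by simp
    have m1: "?m < 1" using m dd elim by simp
    have "?d n < 1 \<and> ln ?m \<ge> ln (?d n) / (1 - e')"
      by (rule alg_M5[OF m(2) m1 e']) (use dpos[OF pre_in[OF s]] N[of n] elim in auto)
    then have "ln ?m \<ge> (1 + \<epsilon>) * ln (?d n)" using e'2 by (simp add: divide_inverse mult.commute)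
    moreover have "ln ?m \<le> ln (?d (Suc n))" using m by simp
    ultimately show ?case by linarith
  qed
qed

lemma cyl_lb:
  assumes D: "D > (0::nat)"
  shows "\<exists>\<rho>0>0. \<forall>\<rho>. 0 < \<rho> \<longrightarrow> \<rho> < \<rho>0 \<longrightarrow> (\<forall>w\<in>cyl \<rho>. diameter (E w) > \<rho> powr (1 + 1/real D))"
proof -
  define \<epsilon> where "\<epsilon> = 1 / (real D + 1)"
  have e: "0 < \<epsilon>" "\<epsilon> < 1" unfolding \<epsilon>_def using D by auto
  have e2: "1 / (1 - \<epsilon>) = 1 + 1 / real D" unfolding \<epsilon>_def using D by (simp add: field_simps)
  obtain N0 where N0: "\<And>s n. s \<in> infinite_words \<Sigma> \<Longrightarrow> n \<ge> N0 \<Longrightarrow>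
      \<bar>ln (diameter (E (prefix_of s n))) / ln (Min (diameter ` E ` offspring \<Sigma> (prefix_of s n))) - 1\<bar> < \<epsilon>"
    using M5[OF e(1)] by blast
  define sh where "sh = diameter ` E ` {w \<in> \<Sigma>. length w \<le> N0}"
  have shf: "finite sh" unfolding sh_def using level_le_fin by simp
  have shne: "sh \<noteq> {}" unfolding sh_def using root by auto
  have shpos: "Min sh > 0" using Min_in[OF shf shne] dpos unfolding sh_def by auto
  define \<rho>0 where "\<rho>0 = min 1 (Min sh)"
  have "\<rho>0 > 0" unfolding \<rho>0_def using shpos by simp
  moreover have "\<forall>\<rho>. 0 < \<rho> \<longrightarrow> \<rho> < \<rho>0 \<longrightarrow> (\<forall>w\<in>cyl \<rho>. diameter (E w) > \<rho> powr (1 + 1/real D))"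
  proof (intro allI impI ballI)
    fix \<rho> w assume \<rho>: "0 < \<rho>" "\<rho> < \<rho>0" and w: "w \<in> cyl \<rho>"
    have wS: "w \<in> \<Sigma>" and wne: "w \<noteq> []" and dw: "diameter (E w) \<le> \<rho>"
      and dp: "diameter (E (butlast w)) > \<rho>" using w by (auto simp: cyl_def)
    have lw: "length w > N0"
    proof (rule ccontr)
      assume "\<not> length w > N0"
      then have "diameter (E w) \<in> sh" unfolding sh_def using wS by auto
      then have "Min sh \<le> diameter (E w)" using shf by simp
      then show False using dw \<rho> unfolding \<rho>0_def by simp
    qed
    define p where "p = butlast w"
    have pS: "p \<in> \<Sigma>" unfolding p_def using butlast_in[OF wS] .
    have lp: "length p \<ge> N0" unfolding p_def using lw by simp
    obtain s where s: "s \<in> infinite_words \<Sigma>" "prefix_of s (length p) = p" using ext_inf[OF pS] by blast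
    let ?m = "Min (diameter ` E ` offspring \<Sigma> p)"
    have r: "\<bar>ln (diameter (E p)) / ln ?m - 1\<bar> < \<epsilon>" using N0[OF s(1) lp] s(2) by simp
    have fin: "finite (diameter ` E ` offspring \<Sigma> p)" using offs[OF pS] by simp
    have wo: "w \<in> offspring \<Sigma> p" unfolding offspring_def p_def using wS wne
      by (intro CollectI exI[of _ "last w"]) simp
    have m1: "?m \<le> diameter (E w)" using fin wo by (intro Min_le) auto
    have "?m \<in> diameter ` E ` offspring \<Sigma> p" using fin wo by (intro Min_in) auto
    then have m0: "?m > 0" using dpos unfolding offspring_def by auto
    have mlt: "?m < 1" using m1 dw \<rho> unfolding \<rho>0_def by simp
    have dpp: "diameter (E p) > 0" using dpos[OF pS] .
    have "diameter (E p) < 1 \<and> ln ?m \<ge> ln (diameter (E p)) / (1 - \<epsilon>)"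
      by (rule alg_M5[OF m0 mlt e dpp r])
    then have lm: "ln ?m \<ge> ln (diameter (E p)) * (1 + 1 / real D)" using e2 by (simp add: divide_inverse)
    have "ln \<rho> < ln (diameter (E p))" using dp \<rho> unfolding p_def by simp
    then have "ln \<rho> * (1 + 1 / real D) < ln (diameter (E p)) * (1 + 1 / real D)"
      by (intro mult_strict_right_mono) (auto intro: add_pos_nonneg)
    moreover have "ln (\<rho> powr (1 + 1/real D)) = (1 + 1/real D) * ln \<rho>" using \<rho> by (simp add: ln_powr)
    ultimately have "ln (\<rho> powr (1 + 1/real D)) < ln ?m" using lm by (simp add: mult.commute)
    moreover have pos: "\<rho> powr (1 + 1/real D) > 0" using \<rho> by simp
    ultimately have "\<rho> powr (1 + 1/real D) < ?m" using ln_less_cancel_iff[OF pos m0] by blast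
    then show "diameter (E w) > \<rho> powr (1 + 1/real D)" using m1 by simp
  qed
  ultimately show ?thesis by blast
qed

definition CC :: real where
  "CC = (SOME C0. C0 > 0 \<and> (\<forall>w \<in> \<Sigma>. \<exists>x \<in> E w. cball x (C0 * diameter (E w)) \<subseteq> E w))"

lemma CC: "CC > 0 \<and> (\<forall>w \<in> \<Sigma>. \<exists>x \<in> E w. cball x (CC * diameter (E w)) \<subseteq> E w)"
  unfolding CC_def using someI_ex[OF M4] by simp

definition cen :: "'i list \<Rightarrow> 'a" where
  "cen w = (SOME x. x \<in> E w \<and> cball x (CC * diameter (E w)) \<subseteq> E w)"

lemma cen: "w \<in> \<Sigma> \<Longrightarrow> cen w \<in> E w \<and> cball (cen w) (CC * diameter (E w)) \<subseteq> E w"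
  unfolding cen_def using CC by (metis (no_types, lifting) someI_ex)

lemma cyl_count:
  assumes B: "B \<subseteq> cyl \<rho>" and sub: "\<And>Q. Q \<in> B \<Longrightarrow> E Q \<subseteq> cball x R" and R: "R > 0"
    and lb: "lb > 0" "\<And>Q. Q \<in> B \<Longrightarrow> lb \<le> diameter (E Q)" and j: "R / 2^j \<le> CC * lb / 2"
  shows "finite B \<and> card B \<le> NN^j"
proof -
  have BS: "Q \<in> \<Sigma>" if "Q \<in> B" for Q using B that by (auto simp: cyl_def)
  have inj: "inj_on cen B"
  proof (rule inj_onI)
    fix Q Q' assume q: "Q \<in> B" "Q' \<in> B" "cen Q = cen Q'"
    show "Q = Q'"
    proof (rule ccontr)
      assume "Q \<noteq> Q'"
      then have "E Q \<inter> E Q' = {}" using cyl_disj B q by blast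
      then show False using cen[OF BS[OF q(1)]] cen[OF BS[OF q(2)]] q(3) by auto
    qed
  qed
  have P: "cen ` B \<subseteq> cball x R" using sub cen BS by blast
  have sep: "dist p q > CC * lb" if pq: "p \<in> cen ` B" "q \<in> cen ` B" "p \<noteq> q" for p q
  proof -
    obtain Q Q' where Q: "Q \<in> B" "Q' \<in> B" "p = cen Q" "q = cen Q'" using pq(1,2) by blast
    have "Q \<noteq> Q'" using Q pq(3) by auto
    then have dj: "E Q \<inter> E Q' = {}" using cyl_disj B Q by blast
    have "q \<in> E Q'" using cen[OF BS[OF Q(2)]] Q by simp
    then have "q \<notin> cball p (CC * diameter (E Q))" using cen[OF BS[OF Q(1)]] Q dj by blast
    then have "dist p q > CC * diameter (E Q)" by simp
    moreover have "CC * lb \<le> CC * diameter (E Q)" using lb(2)[OF Q(1)] CC by simp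
    ultimately show ?thesis by simp
  qed
  have "finite (cen ` B) \<and> card (cen ` B) \<le> NN^j"
    by (rule packing[OF P R sep j])
  moreover have "card (cen ` B) = card B" using inj by (rule card_image)
  ultimately show ?thesis using inj finite_imageD by metis
qed

end


context MS begin

definition nbr :: "real \<Rightarrow> 'i list \<Rightarrow> 'i list set" where
  "nbr \<rho> P = {Q \<in> cyl \<rho>. \<exists>p\<in>E P. \<exists>q\<in>E Q. dist p q \<le> \<rho>}"

lemma nbr_sym: assumes Q: "Q \<in> nbr \<rho> P" and P: "P \<in> cyl \<rho>" shows "P \<in> nbr \<rho> Q"
proof -
  obtain p q where pq: "p \<in> E P" "q \<in> E Q" "dist p q \<le> \<rho>" using Q unfolding nbr_def by blast
  have "dist q p \<le> \<rho>" using pq(3) by (simp add: dist_commute)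
  then show ?thesis unfolding nbr_def using P pq(1,2) by blast
qed

lemma E_root: "w \<in> \<Sigma> \<Longrightarrow> E w \<subseteq> E []"
  using E_take[of w 0] by simp

lemma root_ball: "\<exists>x0 R0. R0 > 0 \<and> E [] \<subseteq> cball x0 R0"
proof -
  obtain x0 e where e: "E [] \<subseteq> cball x0 e" "0 \<le> e"
    using bdd[OF root] unfolding bounded_subset_cball by blast
  then show ?thesis by (intro exI[of _ x0] exI[of _ "e+1"]) auto
qed

lemma powr_half_bound:
  assumes D: "D > (0::nat)"
  shows "((1/2::real)^k) powr (1 + 1/real D) \<ge> (1/2)^(k + k div D + 1)"
proof -
  have "((1/2::real)^k) powr (1 + 1/real D) = ((1/2) powr real k) powr (1 + 1/real D)"
    by (simp add: powr_realpow)
  also have "\<dots> = (1/2) powr (real k * (1 + 1/real D))" by (simp add: powr_powr)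
  also have "\<dots> \<ge> (1/2) powr (real (k + k div D + 1))"
  proof (rule powr_mono')
    have "real k = real D * real (k div D) + real (k mod D)" by (simp flip: of_nat_mult of_nat_add)
    moreover have "real (k mod D) < real D" using D by simp
    ultimately have "real k < real D * (real (k div D) + 1)" by (simp add: algebra_simps)
    then have "real k / real D < real (k div D) + 1" using D by (simp add: divide_less_eq mult.commute)
    then show "real k * (1 + 1/real D) \<le> real (k + k div D + 1)" by (simp add: algebra_simps)
  qed auto
  also have "(1/2::real) powr (real (k + k div D + 1)) = (1/2)^(k + k div D + 1)" by (rule powr_realpow) simp
  finally show ?thesis .
qed

lemma count_main:
  assumes D: "D > (0::nat)"
  shows "\<exists>K c. \<forall>k\<ge>K. finite (cyl ((1/2)^k)) \<and>
      (\<forall>P \<in> cyl ((1/2)^k). finite (nbr ((1/2)^k) P) \<and> card (nbr ((1/2)^k) P) \<le> NN^(c + k div D + 2))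
      \<and> (1/2::real)^k < diameter (E [])"
proof -
  obtain \<rho>0 where \<rho>0: "\<rho>0 > 0" "\<And>\<rho> w. 0 < \<rho> \<Longrightarrow> \<rho> < \<rho>0 \<Longrightarrow> w \<in> cyl \<rho> \<Longrightarrow> diameter (E w) > \<rho> powr (1 + 1/real D)"
    using cyl_lb[OF D] by blast
  have d0: "diameter (E []) > 0" using dpos[OF root] .
  obtain K where K: "(1/2::real)^K < min \<rho>0 (diameter (E []))"
    using real_arch_pow_inv[of "min \<rho>0 (diameter (E []))" "1/2"] \<rho>0 d0 by auto
  obtain c :: nat where c: "3 / CC \<le> real c" using real_arch_simple by blast
  have c2: "3 \<le> CC * 2^c"
  proof -
    have "real c \<le> 2^c" using of_nat_less_two_power[of c, where 'a=real] by simp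
    then have "3 / CC \<le> 2^c" using c by linarith
    then show ?thesis using CC by (simp add: divide_le_eq mult.commute)
  qed
  obtain x0 R0 where R0: "R0 > 0" "E [] \<subseteq> cball x0 R0" using root_ball by blast
  have "\<forall>k\<ge>K. finite (cyl ((1/2)^k)) \<and>
      (\<forall>P \<in> cyl ((1/2)^k). finite (nbr ((1/2)^k) P) \<and> card (nbr ((1/2)^k) P) \<le> NN^(c + k div D + 2))
      \<and> (1/2::real)^k < diameter (E [])"
  proof (intro allI impI conjI)
    fix k assume k: "k \<ge> K"
    define \<rho> where "\<rho> = (1/2::real)^k"
    have \<rho>K: "\<rho> \<le> (1/2)^K" unfolding \<rho>_def using k by (intro power_decreasing) auto
    have K2: "(1/2::real)^K < \<rho>0" "(1/2::real)^K < diameter (E [])" using K by auto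
    have \<rho>: "\<rho> > 0" "\<rho> < \<rho>0" "\<rho> < diameter (E [])"
      using \<rho>K K2 by (simp add: \<rho>_def, linarith, linarith)
    then show "(1/2::real)^k < diameter (E [])" unfolding \<rho>_def by simp
    define lb where "lb = (1/2::real)^(k + k div D + 1)"
    have lb0: "lb > 0" unfolding lb_def by simp
    have lbQ: "lb \<le> diameter (E Q)" if "Q \<in> cyl \<rho>" for Q
      using \<rho>0(2)[OF \<rho>(1,2) that] powr_half_bound[OF D, of k] unfolding lb_def \<rho>_def by linarith
    obtain j0 where j0: "(1/2::real)^j0 < CC * lb / 2 / R0"
      using real_arch_pow_inv[of "CC * lb / 2 / R0" "1/2"] CC lb0 R0 by auto
    have j0': "R0 / 2^j0 \<le> CC * lb / 2"
    proof -
      have "R0 / 2^j0 = R0 * (1/2)^j0" by (simp add: power_one_over)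
      also have "\<dots> \<le> R0 * (CC * lb / 2 / R0)" using j0 R0 by (intro mult_left_mono) auto
      also have "\<dots> = CC * lb / 2" using R0 by simp
      finally show ?thesis .
    qed
    have cylS: "Q \<in> \<Sigma>" if "Q \<in> cyl \<rho>" for Q using that by (auto simp: cyl_def)
    have "finite (cyl \<rho>) \<and> card (cyl \<rho>) \<le> NN^j0"
      by (rule cyl_count[OF order_refl _ R0(1) lb0 lbQ j0']) (use E_root cylS R0 in blast)+
    then show "finite (cyl ((1/2)^k))" unfolding \<rho>_def by simp
    show "\<forall>P \<in> cyl ((1/2)^k). finite (nbr ((1/2)^k) P) \<and> card (nbr ((1/2)^k) P) \<le> NN^(c + k div D + 2)"
    proof
      fix P assume P: "P \<in> cyl ((1/2)^k)"
      then have PS: "P \<in> \<Sigma>" and dP: "diameter (E P) \<le> \<rho>" unfolding \<rho>_def by (auto simp: cyl_def)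
      obtain p0 where p0: "p0 \<in> E P" using ne[OF PS] by blast
      have sub: "E Q \<subseteq> cball p0 (3 * \<rho>)" if Q: "Q \<in> nbr \<rho> P" for Q
      proof
        fix q' assume q': "q' \<in> E Q"
        obtain p q where pq: "p \<in> E P" "q \<in> E Q" "dist p q \<le> \<rho>" using Q unfolding nbr_def by blast
        have QS: "Q \<in> \<Sigma>" and dQ: "diameter (E Q) \<le> \<rho>" using Q unfolding nbr_def by (auto simp: cyl_def)
        have "dist p0 p \<le> diameter (E P)" using diameter_bounded_bound[OF bdd[OF PS] p0 pq(1)] .
        moreover have "dist q q' \<le> diameter (E Q)" using diameter_bounded_bound[OF bdd[OF QS] pq(2) q'] .
        moreover have "dist p0 q' \<le> dist p0 p + dist p q'" by (rule dist_triangle)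
        moreover have "dist p q' \<le> dist p q + dist q q'" by (rule dist_triangle)
        ultimately have "dist p0 q' \<le> 3 * \<rho>" using pq(3) dP dQ by linarith
        then show "q' \<in> cball p0 (3 * \<rho>)" by simp
      qed
      have jj: "3 * \<rho> / 2^(c + k div D + 2) \<le> CC * lb / 2"
      proof -
        have "3 * \<rho> / 2^(c + k div D + 2) = 3 * (1/2)^c * ((1/2)^k * (1/2)^(k div D + 2))"
          unfolding \<rho>_def by (simp add: power_add power_one_over field_simps)
        also have "\<dots> \<le> CC * ((1/2)^k * (1/2)^(k div D + 2))"
        proof (rule mult_right_mono)
          have "3 * (1/2::real)^c = 3 / 2^c" by (simp add: power_one_over)
          also have "\<dots> \<le> CC" using c2 by (simp add: divide_le_eq)
          finally show "3 * (1/2::real)^c \<le> CC" .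
        qed simp
        also have "\<dots> = CC * lb / 2" unfolding lb_def by (simp add: power_add field_simps)
        finally show ?thesis .
      qed
      have "finite (nbr \<rho> P) \<and> card (nbr \<rho> P) \<le> NN^(c + k div D + 2)"
      proof (rule cyl_count[OF _ sub _ lb0 _ jj])
        show "nbr \<rho> P \<subseteq> cyl \<rho>" unfolding nbr_def by auto
        show "0 < 3 * \<rho>" using \<rho> by simp
        show "\<And>Q. Q \<in> nbr \<rho> P \<Longrightarrow> lb \<le> diameter (E Q)" using lbQ unfolding nbr_def by auto
      qed
      then show "finite (nbr ((1/2)^k) P) \<and> card (nbr ((1/2)^k) P) \<le> NN^(c + k div D + 2)"
        unfolding \<rho>_def by simp
    qed
  qed
  then show ?thesis by blast
qed

end


context MS begin

definition good_at :: "nat \<Rightarrow> nat \<Rightarrow> (nat \<Rightarrow> 'i) \<Rightarrow> bool" where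
  "good_at J k s \<longleftrightarrow> (\<exists>m. diameter (E (prefix_of s m)) \<le> (1/2)^k \<and>
     \<mu> (cball (moran_point E s) ((1/2)^k)) \<le> ennreal (2^(k div J)) * \<mu> (E (prefix_of s m)))"

definition Bad :: "nat \<Rightarrow> nat \<Rightarrow> 'a set" where
  "Bad J k = {x \<in> support \<mu>. \<exists>s\<in>infinite_words \<Sigma>. x = moran_point E s \<and> \<not> good_at J k s}"

lemma cball_bound:
  assumes fin: "finite (cyl \<rho>)" and \<rho>: "0 < \<rho>" "\<rho> < diameter (E [])"
    and P: "P \<in> cyl \<rho>" and x: "x \<in> E P"
  shows "\<mu> (cball x \<rho>) \<le> (\<Sum>Q\<in>nbr \<rho> P. \<mu> (E Q))"
proof -
  have finN: "finite (nbr \<rho> P)" using fin unfolding nbr_def by simp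
  have sub: "cball x \<rho> \<subseteq> (cball x \<rho> - support \<mu>) \<union> (\<Union>Q\<in>nbr \<rho> P. E Q)"
  proof
    fix z assume z: "z \<in> cball x \<rho>"
    show "z \<in> (cball x \<rho> - support \<mu>) \<union> (\<Union>Q\<in>nbr \<rho> P. E Q)"
    proof (cases "z \<in> support \<mu>")
      case False then show ?thesis using z by blast
    next
      case True
      then have "z \<in> limit_set \<Sigma> E" using supp by blast
      then obtain t where t: "t \<in> infinite_words \<Sigma>" "\<And>n. z \<in> E (prefix_of t n)" using limit_chain by blast
      obtain m where m: "prefix_of t m \<in> cyl \<rho>" using cyl_of_word[OF t(1) \<rho>] by blast
      have "dist x z \<le> \<rho>" using z by simp
      then have "prefix_of t m \<in> nbr \<rho> P" unfolding nbr_def using m x t(2)[of m] by blast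
      then show ?thesis using t(2)[of m] by blast
    qed
  qed
  have "\<mu> (cball x \<rho>) \<le> \<mu> ((cball x \<rho> - support \<mu>) \<union> (\<Union>Q\<in>nbr \<rho> P. E Q))" using sub by (rule mu_mono)
  also have "\<dots> \<le> \<mu> (cball x \<rho> - support \<mu>) + \<mu> (\<Union>Q\<in>nbr \<rho> P. E Q)" by (rule mu_un)
  also have "\<mu> (cball x \<rho> - support \<mu>) = 0" by (rule null_off_supp) simp
  also have "0 + \<mu> (\<Union>Q\<in>nbr \<rho> P. E Q) \<le> (\<Sum>Q\<in>nbr \<rho> P. \<mu> (E Q))" using finN by (simp add: mu_UN_fin)
  finally show ?thesis .
qed

lemma bad_bound:
  assumes fin: "finite (cyl \<rho>)" and \<rho>: "\<rho> = (1/2)^k" "\<rho> < diameter (E [])"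
    and card: "\<And>P. P \<in> cyl \<rho> \<Longrightarrow> card (nbr \<rho> P) \<le> M"
  shows "ennreal (2^(k div J)) * \<mu> (Bad J k) \<le> of_nat M * \<mu> (E [])"
proof -
  have \<rho>0: "\<rho> > 0" using \<rho> by simp
  let ?A = "cyl \<rho>"
  let ?c = "ennreal (2^(k div J))"
  define BadC where "BadC = {P \<in> ?A. ?c * \<mu> (E P) < (\<Sum>Q\<in>nbr \<rho> P. \<mu> (E Q))}"
  have BadCA: "BadC \<subseteq> ?A" unfolding BadC_def by blast
  have finB: "finite BadC" using fin BadCA finite_subset by blast
  have AS: "P \<in> \<Sigma>" if "P \<in> ?A" for P using that by (auto simp: cyl_def)
  have cover: "Bad J k \<subseteq> (\<Union>P\<in>BadC. E P)"
  proof
    fix x assume "x \<in> Bad J k"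
    then obtain s where s: "s \<in> infinite_words \<Sigma>" "x = moran_point E s" "\<not> good_at J k s"
      unfolding Bad_def by blast
    obtain m where m: "prefix_of s m \<in> ?A" using cyl_of_word[OF s(1) \<rho>0 \<rho>(2)] by blast
    have xin: "x \<in> E (prefix_of s m)" using moran_point_in[OF s(1)] s(2) by simp
    have dm: "diameter (E (prefix_of s m)) \<le> (1/2)^k" using m \<rho>(1) by (simp add: cyl_def)
    have "\<not> \<mu> (cball x \<rho>) \<le> ?c * \<mu> (E (prefix_of s m))"
      using s(3) dm unfolding good_at_def s(2) \<rho>(1) by blast
    then have "?c * \<mu> (E (prefix_of s m)) < \<mu> (cball x \<rho>)" by simp
    also have "\<dots> \<le> (\<Sum>Q\<in>nbr \<rho> (prefix_of s m). \<mu> (E Q))" by (rule cball_bound[OF fin \<rho>0 \<rho>(2) m xin])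
    finally have "prefix_of s m \<in> BadC" unfolding BadC_def using m by blast
    then show "x \<in> (\<Union>P\<in>BadC. E P)" using xin by blast
  qed
  have "?c * \<mu> (Bad J k) \<le> ?c * \<mu> (\<Union>P\<in>BadC. E P)" using cover by (intro mult_left_mono mu_mono) auto
  also have "\<dots> \<le> ?c * (\<Sum>P\<in>BadC. \<mu> (E P))" using finB by (intro mult_left_mono mu_UN_fin) auto
  also have "\<dots> = (\<Sum>P\<in>BadC. ?c * \<mu> (E P))" by (simp add: sum_distrib_left)
  also have "\<dots> \<le> (\<Sum>P\<in>BadC. (\<Sum>Q\<in>nbr \<rho> P. \<mu> (E Q)))"
    by (intro sum_mono) (auto simp: BadC_def)
  also have "\<dots> \<le> (\<Sum>P\<in>?A. (\<Sum>Q\<in>nbr \<rho> P. \<mu> (E Q)))"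
    by (rule sum_mono2[OF fin BadCA]) simp
  also have "\<dots> = (\<Sum>P\<in>?A. (\<Sum>Q\<in>{Q. Q \<in> ?A \<and> Q \<in> nbr \<rho> P}. \<mu> (E Q)))"
    by (intro sum.cong refl) (auto simp: nbr_def intro: arg_cong[where f="\<lambda>S. sum _ S"])
  also have "\<dots> = (\<Sum>Q\<in>?A. (\<Sum>P\<in>{P. P \<in> ?A \<and> Q \<in> nbr \<rho> P}. \<mu> (E Q)))"
    by (rule sum.swap_restrict[OF fin fin])
  also have "\<dots> = (\<Sum>Q\<in>?A. of_nat (card {P. P \<in> ?A \<and> Q \<in> nbr \<rho> P}) * \<mu> (E Q))"
    by simp
  also have "\<dots> \<le> (\<Sum>Q\<in>?A. of_nat M * \<mu> (E Q))"
  proof (intro sum_mono mult_right_mono)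
    fix Q assume Q: "Q \<in> ?A"
    have "{P. P \<in> ?A \<and> Q \<in> nbr \<rho> P} \<subseteq> nbr \<rho> Q" using nbr_sym Q by blast
    moreover have "finite (nbr \<rho> Q)" using fin unfolding nbr_def by simp
    ultimately have "card {P. P \<in> ?A \<and> Q \<in> nbr \<rho> P} \<le> card (nbr \<rho> Q)" by (simp add: card_mono)
    also have "\<dots> \<le> M" using card[OF Q] .
    finally show "(of_nat (card {P. P \<in> ?A \<and> Q \<in> nbr \<rho> P}) :: ennreal) \<le> of_nat M" by simp
  qed simp
  also have "\<dots> = of_nat M * (\<Sum>Q\<in>?A. \<mu> (E Q))" by (simp add: sum_distrib_left)
  also have "(\<Sum>Q\<in>?A. \<mu> (E Q)) = \<mu> (\<Union>Q\<in>?A. E Q)"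
    by (rule mu_add_disj[OF fin]) (use AS cpt compact_imp_closed cyl_disj in blast)+
  also have "\<mu> (\<Union>Q\<in>?A. E Q) \<le> \<mu> (E [])" using E_root AS by (intro mu_mono) blast
  finally show ?thesis by (simp add: mult_left_mono)
qed

end


lemma nat_div_bound1: "(a::nat) * (b div (c * a)) \<le> b div c"
proof -
  have "b div (c * a) = (b div c) div a" by (simp add: div_mult2_eq)
  then show ?thesis by (simp add: mult.commute)
qed

lemma nat_div_bound2: "2 * (k div (2 * J)) \<le> k div (J::nat)"
proof -
  have "k div (2 * J) = (k div J) div 2" by (simp add: div_mult2_eq mult.commute)
  then show ?thesis by simp
qed

lemma pow_div_geom:
  assumes L: "L > (0::nat)"
  shows "(1/2::real)^(n div L) \<le> 2 * ((1/2) powr (1/real L))^n"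
proof -
  have "(1/2::real)^(n div L) = (1/2) powr real (n div L)" by (simp add: powr_realpow)
  also have "\<dots> \<le> (1/2) powr (real n / real L - 1)"
  proof (rule powr_mono')
    have "real n = real L * real (n div L) + real (n mod L)" by (simp flip: of_nat_mult of_nat_add)
    moreover have "real (n mod L) < real L" using L by simp
    ultimately have "real n < real L * (real (n div L) + 1)" by (simp add: algebra_simps)
    then have "real n / real L < real (n div L) + 1" using L by (simp add: divide_less_eq mult.commute)
    then show "real n / real L - 1 \<le> real (n div L)" by simp
  qed auto
  also have "\<dots> = (1/2) powr (real n / real L) / (1/2)" by (simp add: powr_diff)
  also have "(1/2::real) powr (real n / real L) = ((1/2) powr (1/real L)) powr real n"
    by (simp add: powr_powr)
  also have "\<dots> = ((1/2) powr (1/real L))^n" by (simp add: powr_realpow)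
  finally show ?thesis by simp
qed

context MS begin

lemma bad_geom:
  assumes J: "J > (0::nat)"
  shows "\<exists>K C. C \<ge> 0 \<and> (\<forall>k\<ge>K. \<mu> (Bad J k) \<le> ennreal (C * (1/2)^(k div (2*J))))"
proof -
  define D where "D = 2 * J * (NN + 1)"
  have D: "D > 0" unfolding D_def using J by simp
  obtain K c where Kc: "\<And>k. k \<ge> K \<Longrightarrow> finite (cyl ((1/2)^k)) \<and>
      (\<forall>P \<in> cyl ((1/2)^k). finite (nbr ((1/2)^k) P) \<and> card (nbr ((1/2)^k) P) \<le> NN^(c + k div D + 2))
      \<and> (1/2::real)^k < diameter (E [])"
    using count_main[OF D] by blast
  have e0f: "\<mu> (E []) < \<infinity>" using mu_fin[OF bdd[OF root]] .
  define e0 where "e0 = enn2real (\<mu> (E []))"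
  have e0: "e0 \<ge> 0" "\<mu> (E []) = ennreal e0" unfolding e0_def using e0f by auto
  define C where "C = real (NN^(c+2)) * e0"
  have C: "C \<ge> 0" unfolding C_def using e0 by simp
  have "\<forall>k\<ge>K. \<mu> (Bad J k) \<le> ennreal (C * (1/2)^(k div (2*J)))"
  proof (intro allI impI)
    fix k assume k: "k \<ge> K"
    have bb: "ennreal (2^(k div J)) * \<mu> (Bad J k) \<le> of_nat (NN^(c + k div D + 2)) * \<mu> (E [])"
      using Kc[OF k] by (intro bad_bound) auto
    have Bsub: "Bad J k \<subseteq> E []"
    proof
      fix x assume "x \<in> Bad J k"
      then obtain s where "s \<in> infinite_words \<Sigma>" "x = moran_point E s" unfolding Bad_def by blast
      then show "x \<in> E []" using moran_point_in[of s 0] by simp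
    qed
    have bf: "\<mu> (Bad J k) < \<infinity>" using mu_fin bounded_subset[OF bdd[OF root] Bsub] by blast
    define b where "b = enn2real (\<mu> (Bad J k))"
    have b: "b \<ge> 0" "\<mu> (Bad J k) = ennreal b" unfolding b_def using bf by auto
    define q where "q = k div (2*J)"
    have l: "ennreal (2^(k div J)) * \<mu> (Bad J k) = ennreal (2^(k div J) * b)"
      using b by (simp add: ennreal_mult)
    have r: "of_nat (NN^(c + k div D + 2)) * \<mu> (E []) = ennreal (real (NN^(c + k div D + 2)) * e0)"
      using e0 by (simp add: ennreal_mult ennreal_of_nat_eq_real_of_nat)
    have "ennreal (2^(k div J) * b) \<le> ennreal (real (NN^(c + k div D + 2)) * e0)"
      using bb unfolding l r .
    moreover have "real (NN^(c + k div D + 2)) * e0 \<ge> 0" using e0 by simp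
    ultimately have r1: "2^(k div J) * b \<le> real (NN^(c + k div D + 2)) * e0"
      by simp
    have "real (NN^(k div D)) \<le> 2^q"
    proof -
      have "real (NN^(k div D)) = (real NN)^(k div D)" by (rule of_nat_power)
      also have "\<dots> \<le> (2^NN)^(k div D)"
        by (rule power_mono) (use of_nat_less_two_power[of NN, where 'a=real] in auto)
      also have "\<dots> = 2^(NN * (k div D))" by (simp add: power_mult)
      also have "\<dots> \<le> 2^q"
      proof (rule power_increasing)
        have "NN * (k div D) \<le> (NN+1) * (k div ((2*J) * (NN+1)))"
          unfolding D_def by (simp add: mult.assoc)
        also have "\<dots> \<le> k div (2*J)" by (rule nat_div_bound1)
        finally show "NN * (k div D) \<le> q" unfolding q_def .
      qed simp
      finally show ?thesis .
    qed
    have two: "(2::real)^(k div J) \<ge> 2^q * 2^q"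
    proof -
      have "2^q * 2^q = (2::real)^(2*q)" by (simp add: power_add[symmetric] mult_2)
      also have "\<dots> \<le> 2^(k div J)" by (rule power_increasing) (use nat_div_bound2[of k J] q_def in auto)
      finally show ?thesis .
    qed
    have "2^q * 2^q * b \<le> 2^(k div J) * b" using two b by (intro mult_right_mono) auto
    also have "\<dots> \<le> real (NN^(c+2)) * real (NN^(k div D)) * e0"
      using r1 by (simp add: power_add algebra_simps)
    also have "\<dots> \<le> real (NN^(c+2)) * 2^q * e0"
      using \<open>real (NN^(k div D)) \<le> 2^q\<close> e0 by (intro mult_right_mono mult_left_mono) auto
    finally have "2^q * (2^q * b) \<le> 2^q * (C)" unfolding C_def by (simp add: algebra_simps)
    then have "2^q * b \<le> C" by simp
    then have "b \<le> C * (1/2)^q" by (simp add: field_simps power_one_over)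
    then show "\<mu> (Bad J k) \<le> ennreal (C * (1/2)^(k div (2*J)))" using b unfolding q_def by simp
  qed
  then show ?thesis using C by blast
qed

definition Zs :: "nat \<Rightarrow> 'a set" where "Zs J = {x. \<forall>K. \<exists>k\<ge>K. x \<in> Bad J k}"

lemma Zs_null: assumes J: "J > (0::nat)" shows "\<mu> (Zs J) = 0"
proof -
  obtain K C where KC: "C \<ge> 0" "\<And>k. k \<ge> K \<Longrightarrow> \<mu> (Bad J k) \<le> ennreal (C * (1/2)^(k div (2*J)))"
    using bad_geom[OF J] by blast
  define L where "L = 2 * J"
  have L: "L > 0" unfolding L_def using J by simp
  define q where "q = (1/2::real) powr (1/real L)"
  have q: "0 < q" "q < 1"
  proof -
    show "0 < q" unfolding q_def by simp
    have "ln (1/2::real) < 0" by simp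
    then have "ln (1/2::real) / real L < 0" using L by (simp add: divide_neg_pos)
    moreover have "q = exp (ln (1/2) / real L)" unfolding q_def by (simp add: powr_def)
    ultimately show "q < 1" by simp
  qed
  have bnd: "\<mu> (Zs J) \<le> ennreal (2 * C * q^K' / (1 - q))" if K': "K' \<ge> K" for K'
  proof -
    have "Zs J \<subseteq> (\<Union>i. Bad J (K' + i))"
    proof
      fix x assume "x \<in> Zs J"
      then obtain k where "k \<ge> K'" "x \<in> Bad J k" unfolding Zs_def by blast
      then show "x \<in> (\<Union>i. Bad J (K' + i))" by (intro UN_I[of "k - K'"]) auto
    qed
    then have "\<mu> (Zs J) \<le> \<mu> (\<Union>i. Bad J (K' + i))" by (rule mu_mono)
    also have "\<dots> \<le> (\<Sum>i. \<mu> (Bad J (K' + i)))" by (rule mu_count)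
    also have "\<dots> \<le> (\<Sum>i. ennreal ((2 * C * q^K') * q^i))"
    proof (rule suminf_le)
      fix i
      have "\<mu> (Bad J (K' + i)) \<le> ennreal (C * (1/2)^((K' + i) div L))" using KC(2)[of "K'+i"] K' unfolding L_def by simp
      also have "\<dots> \<le> ennreal (C * (2 * q^(K'+i)))"
        using pow_div_geom[OF L, of "K'+i"] KC(1) unfolding q_def by (intro ennreal_leI mult_left_mono) auto
      also have "C * (2 * q^(K'+i)) = (2 * C * q^K') * q^i" by (simp add: power_add)
      finally show "\<mu> (Bad J (K' + i)) \<le> ennreal ((2 * C * q^K') * q^i)" .
    qed auto
    also have "\<dots> = ennreal (\<Sum>i. (2 * C * q^K') * q^i)"
      using q KC(1) by (intro suminf_ennreal2) (auto intro!: summable_mult summable_geometric)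
    also have "(\<Sum>i. (2 * C * q^K') * q^i) = 2 * C * q^K' / (1 - q)"
      using q by (simp add: suminf_mult summable_geometric suminf_geometric)
    finally show ?thesis .
  qed
  have "\<mu> (Zs J) \<le> 0"
  proof (rule ennreal_le_epsilon)
    fix e :: real assume e: "0 < e"
    have "((\<lambda>n. 2 * C / (1 - q) * q^n) \<longlongrightarrow> 2 * C / (1 - q) * 0) sequentially"
      using q by (intro tendsto_mult tendsto_const LIMSEQ_power_zero) auto
    then obtain n0 where n0: "\<And>n. n \<ge> n0 \<Longrightarrow> 2 * C / (1 - q) * q^n < e"
      using order_tendstoD(2)[of _ 0 sequentially e] e by (auto simp: eventually_sequentially)
    define K' where "K' = max K n0"
    have "\<mu> (Zs J) \<le> ennreal (2 * C * q^K' / (1 - q))" using bnd[of K'] unfolding K'_def by simp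
    also have "2 * C * q^K' / (1 - q) = 2 * C / (1 - q) * q^K'" by simp
    also have "ennreal (2 * C / (1 - q) * q^K') \<le> ennreal e"
      using n0[of K'] unfolding K'_def by (intro ennreal_leI less_imp_le) auto
    finally show "\<mu> (Zs J) \<le> 0 + ennreal e" by simp
  qed
  then show ?thesis by simp
qed

end


context MS begin

lemma nonsupp_case:
  assumes s: "s \<in> infinite_words \<Sigma>" and x: "moran_point E s \<notin> support \<mu>"
  shows "upper_local_dim \<mu> (moran_point E s) =
                limsup (\<lambda>n. ereal (ln (enn2real (\<mu> (E (prefix_of s n)))) /
                                   ln (diameter (E (prefix_of s n))))) \<and>
         lower_local_dim \<mu> (moran_point E s) =
                liminf (\<lambda>n. ereal (ln (enn2real (\<mu> (E (prefix_of s n)))) /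
                                   ln (diameter (E (prefix_of s n)))))"
proof -
  let ?x = "moran_point E s"
  obtain r0 where r0: "r0 > 0" "\<not> \<mu> (ball ?x r0) > 0" using x unfolding support_def by auto
  then have r00: "\<mu> (ball ?x r0) = 0" by (simp add: not_gr_zero)
  have ev1: "eventually (\<lambda>r. ereal (ln (enn2real (\<mu> (cball ?x r))) / ln r) = 0) (at_right 0)"
  proof -
    have "\<forall>r>0. r < r0 \<longrightarrow> ereal (ln (enn2real (\<mu> (cball ?x r))) / ln r) = 0"
    proof (intro allI impI)
      fix r :: real assume r: "r > 0" "r < r0"
      have "cball ?x r \<subseteq> ball ?x r0" using r by auto
      then have "\<mu> (cball ?x r) \<le> \<mu> (ball ?x r0)" by (rule mu_mono)
      then have "\<mu> (cball ?x r) = 0" using r00 by simp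
      then show "ereal (ln (enn2real (\<mu> (cball ?x r))) / ln r) = 0" by simp
    qed
    then show ?thesis unfolding eventually_at_right_field using r0 by blast
  qed
  have ev2: "eventually (\<lambda>n. ereal (ln (enn2real (\<mu> (E (prefix_of s n)))) / ln (diameter (E (prefix_of s n)))) = 0) sequentially"
  proof -
    have "eventually (\<lambda>n. diameter (E (prefix_of s n)) < r0) sequentially"
      using order_tendstoD(2)[OF M2[OF s] r0(1)] .
    then show ?thesis
    proof eventually_elim
      case (elim n)
      have "E (prefix_of s n) \<subseteq> ball ?x r0"
      proof
        fix y assume y: "y \<in> E (prefix_of s n)"
        have "dist ?x y \<le> diameter (E (prefix_of s n))"
          using diameter_bounded_bound[OF bdd[OF pre_in[OF s]] moran_point_in[OF s] y] .
        then show "y \<in> ball ?x r0" using elim by simp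
      qed
      then have "\<mu> (E (prefix_of s n)) \<le> \<mu> (ball ?x r0)" by (rule mu_mono)
      then have "\<mu> (E (prefix_of s n)) = 0" using r00 by simp
      then show ?case by simp
    qed
  qed
  have t1: "((\<lambda>r. ereal (ln (enn2real (\<mu> (cball ?x r))) / ln r)) \<longlongrightarrow> 0) (at_right 0)"
    using tendsto_eventually[OF ev1] .
  have t2: "((\<lambda>n. ereal (ln (enn2real (\<mu> (E (prefix_of s n)))) / ln (diameter (E (prefix_of s n))))) \<longlongrightarrow> 0) sequentially"
    using tendsto_eventually[OF ev2] .
  show ?thesis
    unfolding upper_local_dim_def lower_local_dim_def
    using lim_imp_Limsup[OF _ t1] lim_imp_Liminf[OF _ t1] lim_imp_Limsup[OF _ t2] lim_imp_Liminf[OF _ t2]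
    by simp
qed

lemma supp_case:
  assumes s: "s \<in> infinite_words \<Sigma>" and x: "moran_point E s \<in> support \<mu>"
    and nz: "\<And>J. J > 0 \<Longrightarrow> moran_point E s \<notin> Zs J"
  shows "upper_local_dim \<mu> (moran_point E s) =
                limsup (\<lambda>n. ereal (ln (enn2real (\<mu> (E (prefix_of s n)))) /
                                   ln (diameter (E (prefix_of s n))))) \<and>
         lower_local_dim \<mu> (moran_point E s) =
                liminf (\<lambda>n. ereal (ln (enn2real (\<mu> (E (prefix_of s n)))) /
                                   ln (diameter (E (prefix_of s n)))))"
proof -
  let ?x = "moran_point E s"
  define d where "d n = diameter (E (prefix_of s n))" for n
  define a where "a n = enn2real (\<mu> (E (prefix_of s n)))" for n
  define b where "b r = enn2real (\<mu> (cball ?x r))" for r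
  define B where "B = max (enn2real (\<mu> (cball ?x 1))) (enn2real (\<mu> (E []))) + 1"
  have fE: "\<mu> (E (prefix_of s n)) < \<infinity>" for n using mu_fin[OF bdd[OF pre_in[OF s]]] .
  have fB: "\<mu> (cball ?x r) < \<infinity>" for r using mu_fin[of "cball ?x r"] by simp
  have dpos': "\<And>n. d n > 0" unfolding d_def using dpos pre_in[OF s] by blast
  have dmono: "\<And>m n. m \<le> n \<Longrightarrow> d n \<le> d m" unfolding d_def using d_antimono[OF s] by blast
  have dlim: "d \<longlonglongrightarrow> 0" unfolding d_def using M2[OF s] .
  have amono: "\<And>m n. m \<le> n \<Longrightarrow> a n \<le> a m"
  proof -
    fix m n :: nat assume "m \<le> n"
    then have "\<mu> (E (prefix_of s n)) \<le> \<mu> (E (prefix_of s m))" by (intro mu_mono pre_sub[OF s])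
    then show "a n \<le> a m" unfolding a_def using fE[of m] by (intro enn2real_mono) auto
  qed
  have bpos: "\<And>r. r > 0 \<Longrightarrow> b r > 0"
  proof -
    fix r :: real assume r: "r > 0"
    have "\<mu> (ball ?x r) > 0" using x r unfolding support_def by blast
    moreover have "\<mu> (ball ?x r) \<le> \<mu> (cball ?x r)" by (rule mu_mono) auto
    ultimately show "b r > 0" unfolding b_def using fB by (simp add: enn2real_positive_iff)
  qed
  have bmono: "\<And>r r'. 0 < r \<Longrightarrow> r \<le> r' \<Longrightarrow> b r \<le> b r'"
  proof -
    fix r r' :: real assume "0 < r" "r \<le> r'"
    then have "cball ?x r \<subseteq> cball ?x r'" by auto
    then have "\<mu> (cball ?x r) \<le> \<mu> (cball ?x r')" by (rule mu_mono)
    then show "b r \<le> b r'" unfolding b_def using fB[of r'] by (intro enn2real_mono) auto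
  qed
  have ab: "\<And>n r. d n \<le> r \<Longrightarrow> a n \<le> b r"
  proof -
    fix n r assume dr: "d n \<le> r"
    have "E (prefix_of s n) \<subseteq> cball ?x r"
    proof
      fix y assume y: "y \<in> E (prefix_of s n)"
      have "dist ?x y \<le> d n" unfolding d_def
        using diameter_bounded_bound[OF bdd[OF pre_in[OF s]] moran_point_in[OF s] y] .
      then show "y \<in> cball ?x r" using dr by simp
    qed
    then have "\<mu> (E (prefix_of s n)) \<le> \<mu> (cball ?x r)" by (rule mu_mono)
    then show "a n \<le> b r" unfolding a_def b_def using fB[of r] by (intro enn2real_mono) auto
  qed
  have Bpos: "B > 0"
  proof -
    have "enn2real (\<mu> (E [])) \<le> max (enn2real (\<mu> (cball ?x 1))) (enn2real (\<mu> (E [])))" by simp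
    moreover have "0 \<le> enn2real (\<mu> (E []))" by simp
    ultimately show ?thesis unfolding B_def by linarith
  qed
  have bB: "\<And>r. 0 < r \<Longrightarrow> r \<le> 1 \<Longrightarrow> b r \<le> B"
  proof -
    fix r :: real assume "0 < r" "r \<le> 1"
    then have "b r \<le> enn2real (\<mu> (cball ?x 1))" using bmono[of r 1] unfolding b_def by simp
    then show "b r \<le> B" unfolding B_def by simp
  qed
  have aB: "\<And>n. a n \<le> B"
  proof -
    fix n
    have "\<mu> (E (prefix_of s n)) \<le> \<mu> (E [])" using E_root[OF pre_in[OF s]] by (rule mu_mono)
    then have "a n \<le> enn2real (\<mu> (E []))" unfolding a_def
      using mu_fin[OF bdd[OF root]] by (intro enn2real_mono) auto
    then show "a n \<le> B" unfolding B_def by simp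
  qed
  have ratio: "\<And>\<epsilon>. \<epsilon> > 0 \<Longrightarrow> eventually (\<lambda>n. ln (d (Suc n)) \<ge> (1+\<epsilon>) * ln (d n)) sequentially"
    unfolding d_def using ratio_ev[OF s] by blast
  have good: "\<exists>K. \<forall>k\<ge>K. \<exists>m. d m \<le> (1/2)^k \<and> b ((1/2)^k) \<le> (2 powr \<eta>)^k * a m" if \<eta>: "\<eta> > 0" for \<eta>
  proof -
    define J where "J = nat \<lceil>1/\<eta>\<rceil> + 1"
    have J: "J > 0" unfolding J_def by simp
    have J\<eta>: "1 / real J \<le> \<eta>"
    proof -
      have "1/\<eta> \<le> real J" unfolding J_def by linarith
      then show ?thesis using \<eta> J by (simp add: divide_le_eq mult.commute)
    qed
    have "\<exists>K. \<forall>k\<ge>K. ?x \<notin> Bad J k" using nz[OF J] unfolding Zs_def by blast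
    then obtain K where K: "\<And>k. k \<ge> K \<Longrightarrow> ?x \<notin> Bad J k" by blast
    have "\<forall>k\<ge>K. \<exists>m. d m \<le> (1/2)^k \<and> b ((1/2)^k) \<le> (2 powr \<eta>)^k * a m"
    proof (intro allI impI)
      fix k assume k: "k \<ge> K"
      have "good_at J k s" using K[OF k] x s unfolding Bad_def by blast
      then obtain m where m: "d m \<le> (1/2)^k"
        "\<mu> (cball ?x ((1/2)^k)) \<le> ennreal (2^(k div J)) * \<mu> (E (prefix_of s m))"
        unfolding good_at_def d_def by blast
      have "b ((1/2)^k) \<le> enn2real (ennreal (2^(k div J)) * \<mu> (E (prefix_of s m)))"
        unfolding b_def using m(2) fE[of m] by (intro enn2real_mono) (auto simp: ennreal_mult_less_top)
      also have "\<dots> = 2^(k div J) * a m" unfolding a_def by (simp add: enn2real_mult)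
      also have "\<dots> \<le> (2 powr \<eta>)^k * a m"
      proof (rule mult_right_mono)
        have "(2::real)^(k div J) = 2 powr real (k div J)" by (simp add: powr_realpow)
        also have "\<dots> \<le> 2 powr (\<eta> * real k)"
        proof (rule powr_mono)
          have "(k div J) * J \<le> k" by (simp add: mult.commute)
          then have "real (k div J) * real J \<le> real k" by (simp flip: of_nat_mult)
          then have "real (k div J) \<le> real k / real J" using J by (simp add: le_divide_eq)
          also have "\<dots> = real k * (1 / real J)" by simp
          also have "\<dots> \<le> real k * \<eta>" using J\<eta> by (intro mult_left_mono) auto
          finally show "real (k div J) \<le> \<eta> * real k" by (simp add: mult.commute)
        qed simp
        also have "\<dots> = (2 powr \<eta>)^k" by (simp add: powr_powr[symmetric] powr_realpow)
        finally show "(2::real)^(k div J) \<le> (2 powr \<eta>)^k" .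
      qed (simp add: a_def)
      finally show "\<exists>m. d m \<le> (1/2)^k \<and> b ((1/2)^k) \<le> (2 powr \<eta>)^k * a m" using m(1) by blast
    qed
    then show ?thesis by blast
  qed
  have apos: "\<And>n. a n > 0"
  proof -
    fix n
    obtain K where K: "\<forall>k\<ge>K. \<exists>m. d m \<le> (1/2)^k \<and> b ((1/2)^k) \<le> (2 powr 1)^k * a m"
      using good[of 1] by auto
    obtain k0 where k0: "(1/2::real)^k0 < d n" using real_arch_pow_inv[of "d n" "1/2"] dpos' by auto
    define k where "k = max K k0"
    have "(1/2::real)^k \<le> (1/2)^k0" unfolding k_def by (rule power_decreasing) auto
    then have kd: "(1/2::real)^k < d n" using k0 by linarith
    have "K \<le> k" unfolding k_def by simp
    then obtain m where m: "d m \<le> (1/2)^k" "b ((1/2)^k) \<le> (2 powr 1)^k * a m" using K by blast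
    have mn: "n \<le> m"
    proof (rule ccontr)
      assume "\<not> n \<le> m" then have "d n \<le> d m" using dmono by simp
      then show False using m kd by simp
    qed
    have "b ((1/2)^k) > 0" using bpos by simp
    then have "(2 powr 1)^k * a m > 0" using m(2) by linarith
    then have "a m > 0" by (simp add: zero_less_mult_iff)
    then show "a n > 0" using amono[OF mn] by linarith
  qed
  interpret T: transfer_ctx d a b B
    by (unfold_locales) (use dpos' dmono dlim apos amono bpos bmono ab Bpos bB aB ratio good in auto)
  show ?thesis
    using T.limsup_eq T.liminf_eq
    unfolding upper_local_dim_def lower_local_dim_def T.f_def T.R_def a_def b_def d_def by simp
qed

lemma main:
  "\<exists>Z. \<mu> Z = 0 \<and>
           (\<forall>s \<in> infinite_words \<Sigma>. moran_point E s \<notin> Z \<longrightarrow>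
              upper_local_dim \<mu> (moran_point E s) =
                limsup (\<lambda>n. ereal (ln (enn2real (\<mu> (E (prefix_of s n)))) /
                                   ln (diameter (E (prefix_of s n))))) \<and>
              lower_local_dim \<mu> (moran_point E s) =
                liminf (\<lambda>n. ereal (ln (enn2real (\<mu> (E (prefix_of s n)))) /
                                   ln (diameter (E (prefix_of s n))))))"
proof (intro exI conjI)
  define Z where "Z = (\<Union>J. Zs (Suc J))"
  show "\<mu> Z = 0"
  proof -
    have "\<mu> Z \<le> (\<Sum>J. \<mu> (Zs (Suc J)))" unfolding Z_def by (rule mu_count)
    also have "\<dots> = 0" using Zs_null by simp
    finally show ?thesis by simp
  qed
  show "\<forall>s \<in> infinite_words \<Sigma>. moran_point E s \<notin> Z \<longrightarrow>
              upper_local_dim \<mu> (moran_point E s) =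
                limsup (\<lambda>n. ereal (ln (enn2real (\<mu> (E (prefix_of s n)))) /
                                   ln (diameter (E (prefix_of s n))))) \<and>
              lower_local_dim \<mu> (moran_point E s) =
                liminf (\<lambda>n. ereal (ln (enn2real (\<mu> (E (prefix_of s n)))) /
                                   ln (diameter (E (prefix_of s n)))))"
  proof (intro ballI impI)
    fix s assume s: "s \<in> infinite_words \<Sigma>" and xz: "moran_point E s \<notin> Z"
    show "upper_local_dim \<mu> (moran_point E s) =
                limsup (\<lambda>n. ereal (ln (enn2real (\<mu> (E (prefix_of s n)))) /
                                   ln (diameter (E (prefix_of s n))))) \<and>
              lower_local_dim \<mu> (moran_point E s) =
                liminf (\<lambda>n. ereal (ln (enn2real (\<mu> (E (prefix_of s n)))) /
                                   ln (diameter (E (prefix_of s n)))))"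
    proof (cases "moran_point E s \<in> support \<mu>")
      case True
      have nz: "moran_point E s \<notin> Zs J" if J0: "J > 0" for J
      proof -
        obtain J' where "J = Suc J'" using J0 by (cases J) auto
        then show ?thesis using xz unfolding Z_def by blast
      qed
      show ?thesis by (rule supp_case[OF s True nz])
    next
      case False
      show ?thesis by (rule nonsupp_case[OF s False])
    qed
  qed
qed

end

theorem lemma4p2:
  fixes \<Sigma> :: "'i::countable list set"
    and E :: "'i list \<Rightarrow> 'a::complete_space set"
    and \<mu> :: "'a set \<Rightarrow> ennreal"
  assumes "doubling_space TYPE('a)"
    and "moran_construction \<Sigma> E"
    and "is_measure \<mu>"
    and "support \<mu> \<subseteq> limit_set \<Sigma> E"
  shows "\<exists>Z. \<mu> Z = 0 \<and>
           (\<forall>s \<in> infinite_words \<Sigma>. moran_point E s \<notin> Z \<longrightarrow>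
              upper_local_dim \<mu> (moran_point E s) =
                limsup (\<lambda>n. ereal (ln (enn2real (\<mu> (E (prefix_of s n)))) /
                                   ln (diameter (E (prefix_of s n))))) \<and>
              lower_local_dim \<mu> (moran_point E s) =
                liminf (\<lambda>n. ereal (ln (enn2real (\<mu> (E (prefix_of s n)))) /
                                   ln (diameter (E (prefix_of s n))))))"
proof -
  interpret MS \<Sigma> E \<mu> using assms by unfold_locales
  show ?thesis by (rule main)
qed

end
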